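(* Let $T$ be a bimonad on a left closed monoidal category $\mathcal C$. (a) If $T$ admits a left antipode, it is unique. (b) If $T$ is a left Hopf monad, its left antipode $s^l$ satisfies, for all objects $X,Y,Z$: $s^l_{X,Y}\mu_{[TX,Y]^l}=[X,\mu_Y]^l\,s^l_{X,TY}\,T(s^l_{TX,Y})\,T^2[\mu_X,Y]^l$; $s^l_{X,Y}\eta_{[TX,Y]^l}=[\eta_X,\eta_Y]^l$; $s^l_{X\otimes Y,Z}\,T[T_2(X,Y),Z]^l=[X,s^l_{Y,Z}]^l\,s^l_{X,[TY,Z]^l}$; $s^l_{T\mathbb 1,X}[T_0,X]^l=\mathrm{id}_{TX}$, where the canonical isomorphisms $[X\otimes Y,Z]^l\cong[X,[Y,Z]^l]^l$ and $[\mathbb 1,X]^l\cong X$ are suppressed. (The analogous statements hold for right antipodes on right closed categories.)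
   Context: Monoidal categories are strict. A bimonad on $\mathcal C$ is a monad $(T,\mu,\eta)$ with a comonoidal structure $T_2(X,Y)\colon T(X\otimes Y)\to TX\otimes TY$, $T_0\colon T\mathbb 1\to\mathbb 1$ such that $\mu,\eta$ are comonoidal. $T$ is a left Hopf monad if $H^l_{X,Y}=(TX\otimes\mu_Y)T_2(X,TY)$ is invertible for all $X,Y$. A monoidal category is left closed if each $?\otimes X$ has a right adjoint $[X,?]^l$, with counit $\mathrm{ev}^X_Y\colon[X,Y]^l\otimes X\to Y$ and unit $\mathrm{coev}^X_Y\colon Y\to[X,Y\otimes X]^l$. A left antipode for $T$ is a natural transformation $s^l_{X,Y}\colon T[TX,Y]^l\to[X,TY]^l$ such that for all $X,Y$: (1) $T\big(\mathrm{ev}^X_Y([\eta_X,Y]^l\otimes X)\big)=\mathrm{ev}^{TX}_{TY}\big(s^l_{TX,Y}\,T[\mu_X,Y]^l\otimes TX\big)T_2([TX,Y]^l,X)$; (2) $[X,TY\otimes\eta_X]^l\,\mathrm{coev}^X_{TY}=[X,(TY\otimes\mu_X)T_2(Y,TX)]^l\,s^l_{X,Y\otimes TX}\,T(\mathrm{coev}^{TX}_Y)$. It is a known result that a bimonad on a left closed category is a left Hopf monad iff it admits a left antipode. *)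

theory Defs
  imports Main
begin

record ('o,'m) mcat =
  ob  :: "'o set"
  arr :: "'m set"
  dm  :: "'m \<Rightarrow> 'o"
  cd  :: "'m \<Rightarrow> 'o"
  idm :: "'o \<Rightarrow> 'm"
  cmp :: "'m \<Rightarrow> 'm \<Rightarrow> 'm"   (* cmp C g f = g \<circ> f *)
  tob :: "'o \<Rightarrow> 'o \<Rightarrow> 'o"
  tar :: "'m \<Rightarrow> 'm \<Rightarrow> 'm"
  one :: "'o"

definition hom :: "('o,'m,'x) mcat_scheme \<Rightarrow> 'o \<Rightarrow> 'o \<Rightarrow> 'm set" where
  "hom C X Y = {f \<in> arr C. dm C f = X \<and> cd C f = Y}"

definition strict_moncat :: "('o,'m,'x) mcat_scheme \<Rightarrow> bool" where
  "strict_moncat C \<longleftrightarrow>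
    (\<forall>f\<in>arr C. dm C f \<in> ob C \<and> cd C f \<in> ob C) \<and>
    (\<forall>X\<in>ob C. idm C X \<in> hom C X X) \<and>
    (\<forall>f\<in>arr C. \<forall>g\<in>arr C. cd C f = dm C g \<longrightarrow> cmp C g f \<in> hom C (dm C f) (cd C g)) \<and>
    (\<forall>f\<in>arr C. cmp C f (idm C (dm C f)) = f \<and> cmp C (idm C (cd C f)) f = f) \<and>
    (\<forall>f\<in>arr C. \<forall>g\<in>arr C. \<forall>h\<in>arr C. cd C f = dm C g \<longrightarrow> cd C g = dm C h \<longrightarrow>
        cmp C h (cmp C g f) = cmp C (cmp C h g) f) \<and>
    one C \<in> ob C \<and>
    (\<forall>X\<in>ob C. \<forall>Y\<in>ob C. tob C X Y \<in> ob C) \<and>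
    (\<forall>f\<in>arr C. \<forall>g\<in>arr C. tar C f g \<in> hom C (tob C (dm C f) (dm C g)) (tob C (cd C f) (cd C g))) \<and>
    (\<forall>X\<in>ob C. \<forall>Y\<in>ob C. tar C (idm C X) (idm C Y) = idm C (tob C X Y)) \<and>
    (\<forall>f\<in>arr C. \<forall>g\<in>arr C. \<forall>f'\<in>arr C. \<forall>g'\<in>arr C. cd C f = dm C g \<longrightarrow> cd C f' = dm C g' \<longrightarrow>
        tar C (cmp C g f) (cmp C g' f') = cmp C (tar C g g') (tar C f f')) \<and>
    (\<forall>X\<in>ob C. \<forall>Y\<in>ob C. \<forall>Z\<in>ob C. tob C (tob C X Y) Z = tob C X (tob C Y Z)) \<and>
    (\<forall>X\<in>ob C. tob C (one C) X = X \<and> tob C X (one C) = X) \<and>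
    (\<forall>f\<in>arr C. \<forall>g\<in>arr C. \<forall>h\<in>arr C. tar C (tar C f g) h = tar C f (tar C g h)) \<and>
    (\<forall>f\<in>arr C. tar C (idm C (one C)) f = f \<and> tar C f (idm C (one C)) = f)"

definition iso :: "('o,'m,'x) mcat_scheme \<Rightarrow> 'm \<Rightarrow> bool" where
  "iso C f \<longleftrightarrow> f \<in> arr C \<and> (\<exists>g\<in>hom C (cd C f) (dm C f).
      cmp C g f = idm C (dm C f) \<and> cmp C f g = idm C (cd C f))"

section \<open>Left closed structure: a right adjoint [X,?] of ? \<otimes> X given by evaluations\<close>

record ('o,'m) lclosed =
  ihob :: "'o \<Rightarrow> 'o \<Rightarrow> 'o"   (* ihob L X Y = [X,Y]^l *)
  evm  :: "'o \<Rightarrow> 'o \<Rightarrow> 'm"   (* evm L X Y = ev^X_Y : [X,Y]^l \<otimes> X \<rightarrow> Y *)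

definition left_closed :: "('o,'m,'x) mcat_scheme \<Rightarrow> ('o,'m,'y) lclosed_scheme \<Rightarrow> bool" where
  "left_closed C L \<longleftrightarrow>
    (\<forall>X\<in>ob C. \<forall>Y\<in>ob C. ihob L X Y \<in> ob C \<and>
       evm L X Y \<in> hom C (tob C (ihob L X Y) X) Y \<and>
       (\<forall>Z\<in>ob C. \<forall>f\<in>hom C (tob C Z X) Y.
          \<exists>!g. g \<in> hom C Z (ihob L X Y) \<and> cmp C (evm L X Y) (tar C g (idm C X)) = f))"

text \<open>Bifunctoriality of the internal hom: for f : X' \<rightarrow> X and g : Y \<rightarrow> Y',
  ihmor f g = [f,g]^l : [X,Y]^l \<rightarrow> [X',Y']^l. In particular [f,Y]^l = ihmor f (id Y)
  and [X,g]^l = ihmor (id X) g.\<close>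
definition ihmor :: "('o,'m,'x) mcat_scheme \<Rightarrow> ('o,'m,'y) lclosed_scheme \<Rightarrow> 'm \<Rightarrow> 'm \<Rightarrow> 'm" where
  "ihmor C L f g = (THE h. h \<in> hom C (ihob L (cd C f) (dm C g)) (ihob L (dm C f) (cd C g)) \<and>
      cmp C (evm L (dm C f) (cd C g)) (tar C h (idm C (dm C f))) =
      cmp C g (cmp C (evm L (cd C f) (dm C g)) (tar C (idm C (ihob L (cd C f) (dm C g))) f)))"

definition coev :: "('o,'m,'x) mcat_scheme \<Rightarrow> ('o,'m,'y) lclosed_scheme \<Rightarrow> 'o \<Rightarrow> 'o \<Rightarrow> 'm" where
  "coev C L X Y = (THE h. h \<in> hom C Y (ihob L X (tob C Y X)) \<and>
      cmp C (evm L X (tob C Y X)) (tar C h (idm C X)) = idm C (tob C Y X))"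

definition curry_iso :: "('o,'m,'x) mcat_scheme \<Rightarrow> ('o,'m,'y) lclosed_scheme \<Rightarrow> 'o \<Rightarrow> 'o \<Rightarrow> 'o \<Rightarrow> 'm" where
  "curry_iso C L X Y Z =
    (let k = (THE k. k \<in> hom C (tob C (ihob L (tob C X Y) Z) X) (ihob L Y Z) \<and>
                 cmp C (evm L Y Z) (tar C k (idm C Y)) = evm L (tob C X Y) Z)
     in (THE h. h \<in> hom C (ihob L (tob C X Y) Z) (ihob L X (ihob L Y Z)) \<and>
                 cmp C (evm L X (ihob L Y Z)) (tar C h (idm C X)) = k))"

text \<open>The canonical isomorphism [1,X]^l \<rightarrow> X is ev^1_X : [1,X]^l = [1,X]^l \<otimes> 1 \<rightarrow> X.\<close>

record ('o,'m) bimon =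
  Tob :: "'o \<Rightarrow> 'o"
  Tar :: "'m \<Rightarrow> 'm"
  mu  :: "'o \<Rightarrow> 'm"
  eta :: "'o \<Rightarrow> 'm"
  Ttwo :: "'o \<Rightarrow> 'o \<Rightarrow> 'm"
  Tzero :: "'m"

definition bimonad :: "('o,'m,'x) mcat_scheme \<Rightarrow> ('o,'m,'z) bimon_scheme \<Rightarrow> bool" where
  "bimonad C B \<longleftrightarrow>
    \<comment> \<open>T is an endofunctor\<close>
    (\<forall>X\<in>ob C. Tob B X \<in> ob C) \<and>
    (\<forall>f\<in>arr C. Tar B f \<in> hom C (Tob B (dm C f)) (Tob B (cd C f))) \<and>
    (\<forall>X\<in>ob C. Tar B (idm C X) = idm C (Tob B X)) \<and>
    (\<forall>f\<in>arr C. \<forall>g\<in>arr C. cd C f = dm C g \<longrightarrow> Tar B (cmp C g f) = cmp C (Tar B g) (Tar B f)) \<and>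
    \<comment> \<open>monad structure\<close>
    (\<forall>X\<in>ob C. mu B X \<in> hom C (Tob B (Tob B X)) (Tob B X) \<and> eta B X \<in> hom C X (Tob B X)) \<and>
    (\<forall>f\<in>arr C. cmp C (Tar B f) (mu B (dm C f)) = cmp C (mu B (cd C f)) (Tar B (Tar B f)) \<and>
               cmp C (Tar B f) (eta B (dm C f)) = cmp C (eta B (cd C f)) f) \<and>
    (\<forall>X\<in>ob C. cmp C (mu B X) (Tar B (mu B X)) = cmp C (mu B X) (mu B (Tob B X)) \<and>
               cmp C (mu B X) (eta B (Tob B X)) = idm C (Tob B X) \<and>
               cmp C (mu B X) (Tar B (eta B X)) = idm C (Tob B X)) \<and>
    \<comment> \<open>comonoidal structure\<close>
    (\<forall>X\<in>ob C. \<forall>Y\<in>ob C. Ttwo B X Y \<in> hom C (Tob B (tob C X Y)) (tob C (Tob B X) (Tob B Y))) \<and>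
    Tzero B \<in> hom C (Tob B (one C)) (one C) \<and>
    (\<forall>f\<in>arr C. \<forall>g\<in>arr C. cmp C (Ttwo B (cd C f) (cd C g)) (Tar B (tar C f g)) =
        cmp C (tar C (Tar B f) (Tar B g)) (Ttwo B (dm C f) (dm C g))) \<and>
    (\<forall>X\<in>ob C. \<forall>Y\<in>ob C. \<forall>Z\<in>ob C.
        cmp C (tar C (Ttwo B X Y) (idm C (Tob B Z))) (Ttwo B (tob C X Y) Z) =
        cmp C (tar C (idm C (Tob B X)) (Ttwo B Y Z)) (Ttwo B X (tob C Y Z))) \<and>
    (\<forall>X\<in>ob C. cmp C (tar C (Tzero B) (idm C (Tob B X))) (Ttwo B (one C) X) = idm C (Tob B X) \<and>
               cmp C (tar C (idm C (Tob B X)) (Tzero B)) (Ttwo B X (one C)) = idm C (Tob B X)) \<and>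
    \<comment> \<open>mu and eta are comonoidal\<close>
    (\<forall>X\<in>ob C. \<forall>Y\<in>ob C.
        cmp C (Ttwo B X Y) (mu B (tob C X Y)) =
        cmp C (tar C (mu B X) (mu B Y)) (cmp C (Ttwo B (Tob B X) (Tob B Y)) (Tar B (Ttwo B X Y))) \<and>
        cmp C (Ttwo B X Y) (eta B (tob C X Y)) = tar C (eta B X) (eta B Y)) \<and>
    cmp C (Tzero B) (mu B (one C)) = cmp C (Tzero B) (Tar B (Tzero B)) \<and>
    cmp C (Tzero B) (eta B (one C)) = idm C (one C)"

definition left_hopf :: "('o,'m,'x) mcat_scheme \<Rightarrow> ('o,'m,'z) bimon_scheme \<Rightarrow> bool" where
  "left_hopf C B \<longleftrightarrow> bimonad C B \<and>
    (\<forall>X\<in>ob C. \<forall>Y\<in>ob C.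
       iso C (cmp C (tar C (idm C (Tob B X)) (mu B Y)) (Ttwo B X (Tob B Y))))"

definition left_antipode ::
  "('o,'m,'x) mcat_scheme \<Rightarrow> ('o,'m,'y) lclosed_scheme \<Rightarrow> ('o,'m,'z) bimon_scheme \<Rightarrow>
   ('o \<Rightarrow> 'o \<Rightarrow> 'm) \<Rightarrow> bool" where
  "left_antipode C L B s \<longleftrightarrow>
    \<comment> \<open>s_{X,Y} : T[TX,Y]^l \<rightarrow> [X,TY]^l\<close>
    (\<forall>X\<in>ob C. \<forall>Y\<in>ob C. s X Y \<in> hom C (Tob B (ihob L (Tob B X) Y)) (ihob L X (Tob B Y))) \<and>
    \<comment> \<open>naturality in X and Y\<close>
    (\<forall>f\<in>arr C. \<forall>g\<in>arr C.
       cmp C (ihmor C L f (Tar B g)) (s (cd C f) (dm C g)) =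
       cmp C (s (dm C f) (cd C g)) (Tar B (ihmor C L (Tar B f) g))) \<and>
    \<comment> \<open>axiom (1)\<close>
    (\<forall>X\<in>ob C. \<forall>Y\<in>ob C.
       Tar B (cmp C (evm L X Y) (tar C (ihmor C L (eta B X) (idm C Y)) (idm C X))) =
       cmp C (evm L (Tob B X) (Tob B Y))
         (cmp C (tar C (cmp C (s (Tob B X) Y) (Tar B (ihmor C L (mu B X) (idm C Y))))
                        (idm C (Tob B X)))
                (Ttwo B (ihob L (Tob B X) Y) X))) \<and>
    \<comment> \<open>axiom (2)\<close>
    (\<forall>X\<in>ob C. \<forall>Y\<in>ob C.
       cmp C (ihmor C L (idm C X) (tar C (idm C (Tob B Y)) (eta B X))) (coev C L X (Tob B Y)) =
       cmp C (ihmor C L (idm C X) (cmp C (tar C (idm C (Tob B Y)) (mu B X)) (Ttwo B Y (Tob B X))))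
         (cmp C (s X (tob C Y (Tob B X))) (Tar B (coev C L (Tob B X) Y))))"

end

theory Submission
  imports Defs
begin


locale ctx =
  fixes C :: "('o,'m,'x) mcat_scheme" and L :: "('o,'m,'y) lclosed_scheme" and B :: "('o,'m,'z) bimon_scheme"
  assumes SM: "strict_moncat C" and LC: "left_closed C L" and BM: "bimonad C B"
begin

abbreviation cm (infixr "\<cdot>" 55) where "g \<cdot> f \<equiv> cmp C g f"
abbreviation tr (infixr "\<otimes>" 60) where "f \<otimes> g \<equiv> tar C f g"
abbreviation to (infixr "\<odot>" 60) where "X \<odot> Y \<equiv> tob C X Y"
abbreviation I where "I X \<equiv> idm C X"
abbreviation T where "T f \<equiv> Tar B f"
abbreviation TO where "TO X \<equiv> Tob B X"
abbreviation M where "M X \<equiv> mu B X"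
abbreviation E where "E X \<equiv> eta B X"
abbreviation T2 where "T2 X Y \<equiv> Ttwo B X Y"
abbreviation T0 where "T0 \<equiv> Tzero B"
abbreviation IH where "IH X Y \<equiv> ihob L X Y"
abbreviation ev where "ev X Y \<equiv> evm L X Y"
abbreviation hm where "hm f g \<equiv> ihmor C L f g"
abbreviation cv where "cv X Y \<equiv> coev C L X Y"
abbreviation Ar where "Ar \<equiv> arr C"
abbreviation Ob where "Ob \<equiv> ob C"
abbreviation Dm where "Dm f \<equiv> dm C f"
abbreviation Cd where "Cd f \<equiv> cd C f"
abbreviation U where "U \<equiv> one C"

lemmas SM' = SM[unfolded strict_moncat_def hom_def]
lemmas BM' = BM[unfolded bimonad_def hom_def]
lemmas sm1 = SM'[THEN conjunct1]
lemmas sm2 = SM'[THEN conjunct2, THEN conjunct1]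
lemmas sm3 = SM'[THEN conjunct2, THEN conjunct2, THEN conjunct1]
lemmas sm4 = SM'[THEN conjunct2, THEN conjunct2, THEN conjunct2, THEN conjunct1]
lemmas sm5 = SM'[THEN conjunct2, THEN conjunct2, THEN conjunct2, THEN conjunct2, THEN conjunct1]
lemmas sm6 = SM'[THEN conjunct2, THEN conjunct2, THEN conjunct2, THEN conjunct2, THEN conjunct2, THEN conjunct1]
lemmas sm7 = SM'[THEN conjunct2, THEN conjunct2, THEN conjunct2, THEN conjunct2, THEN conjunct2, THEN conjunct2, THEN conjunct1]
lemmas sm8 = SM'[THEN conjunct2, THEN conjunct2, THEN conjunct2, THEN conjunct2, THEN conjunct2, THEN conjunct2, THEN conjunct2, THEN conjunct1]
lemmas sm9 = SM'[THEN conjunct2, THEN conjunct2, THEN conjunct2, THEN conjunct2, THEN conjunct2, THEN conjunct2, THEN conjunct2, THEN conjunct2, THEN conjunct1]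
lemmas sm10 = SM'[THEN conjunct2, THEN conjunct2, THEN conjunct2, THEN conjunct2, THEN conjunct2, THEN conjunct2, THEN conjunct2, THEN conjunct2, THEN conjunct2, THEN conjunct1]
lemmas sm11 = SM'[THEN conjunct2, THEN conjunct2, THEN conjunct2, THEN conjunct2, THEN conjunct2, THEN conjunct2, THEN conjunct2, THEN conjunct2, THEN conjunct2, THEN conjunct2, THEN conjunct1]
lemmas sm12 = SM'[THEN conjunct2, THEN conjunct2, THEN conjunct2, THEN conjunct2, THEN conjunct2, THEN conjunct2, THEN conjunct2, THEN conjunct2, THEN conjunct2, THEN conjunct2, THEN conjunct2, THEN conjunct1]
lemmas sm13 = SM'[THEN conjunct2, THEN conjunct2, THEN conjunct2, THEN conjunct2, THEN conjunct2, THEN conjunct2, THEN conjunct2, THEN conjunct2, THEN conjunct2, THEN conjunct2, THEN conjunct2, THEN conjunct2, THEN conjunct1]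
lemmas sm14 = SM'[THEN conjunct2, THEN conjunct2, THEN conjunct2, THEN conjunct2, THEN conjunct2, THEN conjunct2, THEN conjunct2, THEN conjunct2, THEN conjunct2, THEN conjunct2, THEN conjunct2, THEN conjunct2, THEN conjunct2]
lemmas bm1 = BM'[THEN conjunct1]
lemmas bm2 = BM'[THEN conjunct2, THEN conjunct1]
lemmas bm3 = BM'[THEN conjunct2, THEN conjunct2, THEN conjunct1]
lemmas bm4 = BM'[THEN conjunct2, THEN conjunct2, THEN conjunct2, THEN conjunct1]
lemmas bm5 = BM'[THEN conjunct2, THEN conjunct2, THEN conjunct2, THEN conjunct2, THEN conjunct1]
lemmas bm6 = BM'[THEN conjunct2, THEN conjunct2, THEN conjunct2, THEN conjunct2, THEN conjunct2, THEN conjunct1]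
lemmas bm7 = BM'[THEN conjunct2, THEN conjunct2, THEN conjunct2, THEN conjunct2, THEN conjunct2, THEN conjunct2, THEN conjunct1]
lemmas bm8 = BM'[THEN conjunct2, THEN conjunct2, THEN conjunct2, THEN conjunct2, THEN conjunct2, THEN conjunct2, THEN conjunct2, THEN conjunct1]
lemmas bm9 = BM'[THEN conjunct2, THEN conjunct2, THEN conjunct2, THEN conjunct2, THEN conjunct2, THEN conjunct2, THEN conjunct2, THEN conjunct2, THEN conjunct1]
lemmas bm10 = BM'[THEN conjunct2, THEN conjunct2, THEN conjunct2, THEN conjunct2, THEN conjunct2, THEN conjunct2, THEN conjunct2, THEN conjunct2, THEN conjunct2, THEN conjunct1]
lemmas bm11 = BM'[THEN conjunct2, THEN conjunct2, THEN conjunct2, THEN conjunct2, THEN conjunct2, THEN conjunct2, THEN conjunct2, THEN conjunct2, THEN conjunct2, THEN conjunct2, THEN conjunct1]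
lemmas bm12 = BM'[THEN conjunct2, THEN conjunct2, THEN conjunct2, THEN conjunct2, THEN conjunct2, THEN conjunct2, THEN conjunct2, THEN conjunct2, THEN conjunct2, THEN conjunct2, THEN conjunct2, THEN conjunct1]
lemmas bm13 = BM'[THEN conjunct2, THEN conjunct2, THEN conjunct2, THEN conjunct2, THEN conjunct2, THEN conjunct2, THEN conjunct2, THEN conjunct2, THEN conjunct2, THEN conjunct2, THEN conjunct2, THEN conjunct2, THEN conjunct1]
lemmas bm14 = BM'[THEN conjunct2, THEN conjunct2, THEN conjunct2, THEN conjunct2, THEN conjunct2, THEN conjunct2, THEN conjunct2, THEN conjunct2, THEN conjunct2, THEN conjunct2, THEN conjunct2, THEN conjunct2, THEN conjunct2, THEN conjunct1]
lemmas bm15 = BM'[THEN conjunct2, THEN conjunct2, THEN conjunct2, THEN conjunct2, THEN conjunct2, THEN conjunct2, THEN conjunct2, THEN conjunct2, THEN conjunct2, THEN conjunct2, THEN conjunct2, THEN conjunct2, THEN conjunct2, THEN conjunct2]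

lemma ob_dm[simp]: "f \<in> Ar \<Longrightarrow> Dm f \<in> Ob" using sm1 by blast
lemma ob_cd[simp]: "f \<in> Ar \<Longrightarrow> Cd f \<in> Ob" using sm1 by blast
lemma ob_one[simp]: "U \<in> Ob" using sm6 by blast
lemma ob_tob[simp]: "X \<in> Ob \<Longrightarrow> Y \<in> Ob \<Longrightarrow> X \<odot> Y \<in> Ob" using sm7 by blast
lemma ob_T[simp]: "X \<in> Ob \<Longrightarrow> TO X \<in> Ob" using bm1 by blast
lemma ob_IH[simp]: "X \<in> Ob \<Longrightarrow> Y \<in> Ob \<Longrightarrow> IH X Y \<in> Ob" using LC unfolding left_closed_def by blast

lemma id_arr[simp]: "X \<in> Ob \<Longrightarrow> I X \<in> Ar" and id_dm[simp]: "X \<in> Ob \<Longrightarrow> Dm (I X) = X"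
  and id_cd[simp]: "X \<in> Ob \<Longrightarrow> Cd (I X) = X" using sm2 by blast+

lemma cmp_arr[simp]: "f \<in> Ar \<Longrightarrow> g \<in> Ar \<Longrightarrow> Cd f = Dm g \<Longrightarrow> g \<cdot> f \<in> Ar"
  and cmp_dm[simp]: "f \<in> Ar \<Longrightarrow> g \<in> Ar \<Longrightarrow> Cd f = Dm g \<Longrightarrow> Dm (g \<cdot> f) = Dm f"
  and cmp_cd[simp]: "f \<in> Ar \<Longrightarrow> g \<in> Ar \<Longrightarrow> Cd f = Dm g \<Longrightarrow> Cd (g \<cdot> f) = Cd g"
  using sm3 by blast+

lemma tar_arr[simp]: "f \<in> Ar \<Longrightarrow> g \<in> Ar \<Longrightarrow> f \<otimes> g \<in> Ar"
  and tar_dm[simp]: "f \<in> Ar \<Longrightarrow> g \<in> Ar \<Longrightarrow> Dm (f \<otimes> g) = Dm f \<odot> Dm g"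
  and tar_cd[simp]: "f \<in> Ar \<Longrightarrow> g \<in> Ar \<Longrightarrow> Cd (f \<otimes> g) = Cd f \<odot> Cd g"
  using sm8 by blast+

lemma cmp_idr[simp]: "f \<in> Ar \<Longrightarrow> X = Dm f \<Longrightarrow> f \<cdot> I X = f"
  and cmp_idl[simp]: "f \<in> Ar \<Longrightarrow> X = Cd f \<Longrightarrow> I X \<cdot> f = f" using sm4 by blast+

lemma assoc[simp]: "f \<in> Ar \<Longrightarrow> g \<in> Ar \<Longrightarrow> h \<in> Ar \<Longrightarrow> Cd f = Dm g \<Longrightarrow> Cd g = Dm h \<Longrightarrow>
  (h \<cdot> g) \<cdot> f = h \<cdot> (g \<cdot> f)" using sm5 by metis

lemma tar_id[simp]: "X \<in> Ob \<Longrightarrow> Y \<in> Ob \<Longrightarrow> I X \<otimes> I Y = I (X \<odot> Y)" using sm9 by blast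

lemma interchange: "f \<in> Ar \<Longrightarrow> g \<in> Ar \<Longrightarrow> f' \<in> Ar \<Longrightarrow> g' \<in> Ar \<Longrightarrow> Cd f = Dm g \<Longrightarrow> Cd f' = Dm g' \<Longrightarrow>
   (g \<cdot> f) \<otimes> (g' \<cdot> f') = (g \<otimes> g') \<cdot> (f \<otimes> f')" using sm10 by blast

lemma tob_assoc[simp]: "X \<in> Ob \<Longrightarrow> Y \<in> Ob \<Longrightarrow> Z \<in> Ob \<Longrightarrow> (X \<odot> Y) \<odot> Z = X \<odot> (Y \<odot> Z)" using sm11 by blast
lemma tob_unit[simp]: "X \<in> Ob \<Longrightarrow> U \<odot> X = X" "X \<in> Ob \<Longrightarrow> X \<odot> U = X" using sm12 by blast+
lemma tar_assoc[simp]: "f \<in> Ar \<Longrightarrow> g \<in> Ar \<Longrightarrow> h \<in> Ar \<Longrightarrow> (f \<otimes> g) \<otimes> h = f \<otimes> (g \<otimes> h)" using sm13 by blast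
lemma tar_unit[simp]: "f \<in> Ar \<Longrightarrow> I U \<otimes> f = f" "f \<in> Ar \<Longrightarrow> f \<otimes> I U = f" using sm14 by blast+

lemma T_arr[simp]: "f \<in> Ar \<Longrightarrow> T f \<in> Ar" and T_dm[simp]: "f \<in> Ar \<Longrightarrow> Dm (T f) = TO (Dm f)"
  and T_cd[simp]: "f \<in> Ar \<Longrightarrow> Cd (T f) = TO (Cd f)" using bm2 by blast+
lemma T_id[simp]: "X \<in> Ob \<Longrightarrow> T (I X) = I (TO X)" using bm3 by blast
lemma T_cmp: "f \<in> Ar \<Longrightarrow> g \<in> Ar \<Longrightarrow> Cd f = Dm g \<Longrightarrow> T (g \<cdot> f) = T g \<cdot> T f" using bm4 by blast

lemma M_arr[simp]: "X \<in> Ob \<Longrightarrow> M X \<in> Ar" and M_dm[simp]: "X \<in> Ob \<Longrightarrow> Dm (M X) = TO (TO X)"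
  and M_cd[simp]: "X \<in> Ob \<Longrightarrow> Cd (M X) = TO X" using bm5 by blast+
lemma E_arr[simp]: "X \<in> Ob \<Longrightarrow> E X \<in> Ar" and E_dm[simp]: "X \<in> Ob \<Longrightarrow> Dm (E X) = X"
  and E_cd[simp]: "X \<in> Ob \<Longrightarrow> Cd (E X) = TO X" using bm5 by blast+
lemma M_nat: "f \<in> Ar \<Longrightarrow> T f \<cdot> M (Dm f) = M (Cd f) \<cdot> T (T f)" using bm6 by blast
lemma E_nat: "f \<in> Ar \<Longrightarrow> T f \<cdot> E (Dm f) = E (Cd f) \<cdot> f" using bm6 by blast
lemma M_assoc: "X \<in> Ob \<Longrightarrow> M X \<cdot> T (M X) = M X \<cdot> M (TO X)" using bm7 by blast
lemma M_unit1[simp]: "X \<in> Ob \<Longrightarrow> M X \<cdot> E (TO X) = I (TO X)" using bm7 by blast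
lemma M_unit2[simp]: "X \<in> Ob \<Longrightarrow> M X \<cdot> T (E X) = I (TO X)" using bm7 by blast

lemma T2_arr[simp]: "X \<in> Ob \<Longrightarrow> Y \<in> Ob \<Longrightarrow> T2 X Y \<in> Ar"
  and T2_dm[simp]: "X \<in> Ob \<Longrightarrow> Y \<in> Ob \<Longrightarrow> Dm (T2 X Y) = TO (X \<odot> Y)"
  and T2_cd[simp]: "X \<in> Ob \<Longrightarrow> Y \<in> Ob \<Longrightarrow> Cd (T2 X Y) = TO X \<odot> TO Y" using bm8 by blast+
lemma T0_arr[simp]: "T0 \<in> Ar" and T0_dm[simp]: "Dm T0 = TO U" and T0_cd[simp]: "Cd T0 = U" using bm9 by blast+
lemma T2_nat: "f \<in> Ar \<Longrightarrow> g \<in> Ar \<Longrightarrow> T2 (Cd f) (Cd g) \<cdot> T (f \<otimes> g) = (T f \<otimes> T g) \<cdot> T2 (Dm f) (Dm g)"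
  using bm10 by blast
lemma T2_coassoc: "X \<in> Ob \<Longrightarrow> Y \<in> Ob \<Longrightarrow> Z \<in> Ob \<Longrightarrow>
  (T2 X Y \<otimes> I (TO Z)) \<cdot> T2 (X \<odot> Y) Z = (I (TO X) \<otimes> T2 Y Z) \<cdot> T2 X (Y \<odot> Z)" using bm11 by blast
lemma T2_counit: "X \<in> Ob \<Longrightarrow> (T0 \<otimes> I (TO X)) \<cdot> T2 U X = I (TO X)"
  "X \<in> Ob \<Longrightarrow> (I (TO X) \<otimes> T0) \<cdot> T2 X U = I (TO X)" using bm12 by blast+
lemma M_comon: "X \<in> Ob \<Longrightarrow> Y \<in> Ob \<Longrightarrow> T2 X Y \<cdot> M (X \<odot> Y) = (M X \<otimes> M Y) \<cdot> (T2 (TO X) (TO Y) \<cdot> T (T2 X Y))"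
  using bm13 by blast
lemma E_comon: "X \<in> Ob \<Longrightarrow> Y \<in> Ob \<Longrightarrow> T2 X Y \<cdot> E (X \<odot> Y) = E X \<otimes> E Y" using bm13 by blast
lemma M_T0: "T0 \<cdot> M U = T0 \<cdot> T T0" and E_T0: "T0 \<cdot> E U = I U" using bm14 bm15 by blast+


lemma cont: "a \<cdot> b = c \<Longrightarrow> a \<in> Ar \<Longrightarrow> b \<in> Ar \<Longrightarrow> Cd b = Dm a \<Longrightarrow> r \<in> Ar \<Longrightarrow> Cd r = Dm b \<Longrightarrow> a \<cdot> (b \<cdot> r) = c \<cdot> r"
  by (metis assoc)
lemma cont2: "a \<cdot> (b \<cdot> c) = d \<Longrightarrow> a \<in> Ar \<Longrightarrow> b \<in> Ar \<Longrightarrow> c \<in> Ar \<Longrightarrow> Cd b = Dm a \<Longrightarrow> Cd c = Dm b \<Longrightarrow> r \<in> Ar \<Longrightarrow> Cd r = Dm c \<Longrightarrow>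
  a \<cdot> (b \<cdot> (c \<cdot> r)) = d \<cdot> r"
  by (metis assoc cmp_arr cmp_cd cmp_dm)
lemma cont3: "a \<cdot> (b \<cdot> (c \<cdot> e)) = d \<Longrightarrow> a \<in> Ar \<Longrightarrow> b \<in> Ar \<Longrightarrow> c \<in> Ar \<Longrightarrow> e \<in> Ar \<Longrightarrow> Cd b = Dm a \<Longrightarrow> Cd c = Dm b \<Longrightarrow> Cd e = Dm c \<Longrightarrow> r \<in> Ar \<Longrightarrow> Cd r = Dm e \<Longrightarrow>
  a \<cdot> (b \<cdot> (c \<cdot> (e \<cdot> r))) = d \<cdot> r"
  by (metis assoc cmp_arr cmp_cd cmp_dm)

lemmas LC' = LC[unfolded left_closed_def hom_def]
lemma lcXY: "X \<in> Ob \<Longrightarrow> Y \<in> Ob \<Longrightarrow> IH X Y \<in> Ob \<and>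
       ev X Y \<in> {f \<in> Ar. Dm f = IH X Y \<odot> X \<and> Cd f = Y} \<and>
       (\<forall>Z\<in>Ob. \<forall>f\<in>{f \<in> Ar. Dm f = Z \<odot> X \<and> Cd f = Y}.
          \<exists>!g. g \<in> {g \<in> Ar. Dm g = Z \<and> Cd g = IH X Y} \<and> ev X Y \<cdot> (g \<otimes> I X) = f)"
  by (rule LC'[THEN bspec, THEN bspec])
lemma ev_arr[simp]: "X \<in> Ob \<Longrightarrow> Y \<in> Ob \<Longrightarrow> ev X Y \<in> Ar"
  and ev_dm[simp]: "X \<in> Ob \<Longrightarrow> Y \<in> Ob \<Longrightarrow> Dm (ev X Y) = IH X Y \<odot> X"
  and ev_cd[simp]: "X \<in> Ob \<Longrightarrow> Y \<in> Ob \<Longrightarrow> Cd (ev X Y) = Y" using lcXY by simp_all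

lemma lc_ex1: "X \<in> Ob \<Longrightarrow> Y \<in> Ob \<Longrightarrow> Z \<in> Ob \<Longrightarrow> f \<in> Ar \<Longrightarrow> Dm f = Z \<odot> X \<Longrightarrow> Cd f = Y \<Longrightarrow>
   \<exists>!g. (g \<in> Ar \<and> Dm g = Z \<and> Cd g = IH X Y) \<and> ev X Y \<cdot> (g \<otimes> I X) = f"
proof -
  assume a: "X \<in> Ob" "Y \<in> Ob" "Z \<in> Ob" "f \<in> Ar" "Dm f = Z \<odot> X" "Cd f = Y"
  have "\<exists>!g. g \<in> {g \<in> Ar. Dm g = Z \<and> Cd g = IH X Y} \<and> ev X Y \<cdot> (g \<otimes> I X) = f"
    using lcXY[OF a(1,2)] a(3-6) by blast
  then show ?thesis by simp
qed

lemma mate_unique: "X \<in> Ob \<Longrightarrow> Y \<in> Ob \<Longrightarrow> g \<in> Ar \<Longrightarrow> g' \<in> Ar \<Longrightarrow> Dm g = Dm g' \<Longrightarrow>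
  Cd g = IH X Y \<Longrightarrow> Cd g' = IH X Y \<Longrightarrow> ev X Y \<cdot> (g \<otimes> I X) = ev X Y \<cdot> (g' \<otimes> I X) \<Longrightarrow> g = g'"
proof -
  assume a: "X \<in> Ob" "Y \<in> Ob" "g \<in> Ar" "g' \<in> Ar" "Dm g = Dm g'" "Cd g = IH X Y" "Cd g' = IH X Y"
    "ev X Y \<cdot> (g \<otimes> I X) = ev X Y \<cdot> (g' \<otimes> I X)"
  have "\<exists>!h. (h \<in> Ar \<and> Dm h = Dm g \<and> Cd h = IH X Y) \<and> ev X Y \<cdot> (h \<otimes> I X) = ev X Y \<cdot> (g \<otimes> I X)"
    by (rule lc_ex1) (use a in auto)
  then show ?thesis using a by metis
qed

lemma hm_prop: assumes "f \<in> Ar" "g \<in> Ar"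
  shows "hm f g \<in> Ar \<and> Dm (hm f g) = IH (Cd f) (Dm g) \<and> Cd (hm f g) = IH (Dm f) (Cd g) \<and>
     ev (Dm f) (Cd g) \<cdot> (hm f g \<otimes> I (Dm f)) = g \<cdot> (ev (Cd f) (Dm g) \<cdot> (I (IH (Cd f) (Dm g)) \<otimes> f))"
proof -
  have "\<exists>!h. (h \<in> Ar \<and> Dm h = IH (Cd f) (Dm g) \<and> Cd h = IH (Dm f) (Cd g)) \<and> ev (Dm f) (Cd g) \<cdot> (h \<otimes> I (Dm f)) =
     g \<cdot> (ev (Cd f) (Dm g) \<cdot> (I (IH (Cd f) (Dm g)) \<otimes> f))"
    by (rule lc_ex1) (use assms in auto)
  then have "(hm f g \<in> Ar \<and> Dm (hm f g) = IH (Cd f) (Dm g) \<and> Cd (hm f g) = IH (Dm f) (Cd g)) \<and> ev (Dm f) (Cd g) \<cdot> (hm f g \<otimes> I (Dm f)) =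
     g \<cdot> (ev (Cd f) (Dm g) \<cdot> (I (IH (Cd f) (Dm g)) \<otimes> f))"
    unfolding ihmor_def hom_def mem_Collect_eq by (rule theI') 
  then show ?thesis by blast
qed

lemma hm_arr[simp]: "f \<in> Ar \<Longrightarrow> g \<in> Ar \<Longrightarrow> hm f g \<in> Ar"
  and hm_dm[simp]: "f \<in> Ar \<Longrightarrow> g \<in> Ar \<Longrightarrow> Dm (hm f g) = IH (Cd f) (Dm g)"
  and hm_cd[simp]: "f \<in> Ar \<Longrightarrow> g \<in> Ar \<Longrightarrow> Cd (hm f g) = IH (Dm f) (Cd g)"
  and hm_ev: "f \<in> Ar \<Longrightarrow> g \<in> Ar \<Longrightarrow> ev (Dm f) (Cd g) \<cdot> (hm f g \<otimes> I (Dm f)) = g \<cdot> (ev (Cd f) (Dm g) \<cdot> (I (IH (Cd f) (Dm g)) \<otimes> f))"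
  using hm_prop by blast+

lemma cv_prop: assumes "X \<in> Ob" "Y \<in> Ob"
  shows "cv X Y \<in> Ar \<and> Dm (cv X Y) = Y \<and> Cd (cv X Y) = IH X (Y \<odot> X) \<and> ev X (Y \<odot> X) \<cdot> (cv X Y \<otimes> I X) = I (Y \<odot> X)"
proof -
  have "\<exists>!h. (h \<in> Ar \<and> Dm h = Y \<and> Cd h = IH X (Y \<odot> X)) \<and> ev X (Y \<odot> X) \<cdot> (h \<otimes> I X) = I (Y \<odot> X)"
    by (rule lc_ex1) (use assms in auto)
  then have "(cv X Y \<in> Ar \<and> Dm (cv X Y) = Y \<and> Cd (cv X Y) = IH X (Y \<odot> X)) \<and> ev X (Y \<odot> X) \<cdot> (cv X Y \<otimes> I X) = I (Y \<odot> X)"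
    unfolding coev_def hom_def mem_Collect_eq by (rule theI')
  then show ?thesis by blast
qed

lemma cv_arr[simp]: "X \<in> Ob \<Longrightarrow> Y \<in> Ob \<Longrightarrow> cv X Y \<in> Ar"
  and cv_dm[simp]: "X \<in> Ob \<Longrightarrow> Y \<in> Ob \<Longrightarrow> Dm (cv X Y) = Y"
  and cv_cd[simp]: "X \<in> Ob \<Longrightarrow> Y \<in> Ob \<Longrightarrow> Cd (cv X Y) = IH X (Y \<odot> X)"
  and cv_ev: "X \<in> Ob \<Longrightarrow> Y \<in> Ob \<Longrightarrow> ev X (Y \<odot> X) \<cdot> (cv X Y \<otimes> I X) = I (Y \<odot> X)"
  using cv_prop by blast+

lemma hm_ev': "f \<in> Ar \<Longrightarrow> g \<in> Ar \<Longrightarrow> Dm f = X \<Longrightarrow> Cd g = Y \<Longrightarrow>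
  ev X Y \<cdot> (hm f g \<otimes> I X) = g \<cdot> (ev (Cd f) (Dm g) \<cdot> (I (IH (Cd f) (Dm g)) \<otimes> f))"
  using hm_ev by blast
lemma cv_ev': "X \<in> Ob \<Longrightarrow> Y \<in> Ob \<Longrightarrow> Z = Y \<odot> X \<Longrightarrow> ev X Z \<cdot> (cv X Y \<otimes> I X) = I Z"
  using cv_ev by blast

lemma mate_cmp: "X \<in> Ob \<Longrightarrow> Y \<in> Ob \<Longrightarrow> g \<in> Ar \<Longrightarrow> k \<in> Ar \<Longrightarrow> Cd k = Dm g \<Longrightarrow> Cd g = IH X Y \<Longrightarrow>
   ev X Y \<cdot> ((g \<cdot> k) \<otimes> I X) = ev X Y \<cdot> ((g \<otimes> I X) \<cdot> (k \<otimes> I X))"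
  using interchange[of k g "I X" "I X"] by simp

lemma mate_hm0: "f \<in> Ar \<Longrightarrow> h \<in> Ar \<Longrightarrow> g \<in> Ar \<Longrightarrow> Cd g = IH (Cd f) (Dm h) \<Longrightarrow>
   ev (Dm f) (Cd h) \<cdot> ((hm f h \<cdot> g) \<otimes> I (Dm f)) = h \<cdot> (ev (Cd f) (Dm h) \<cdot> ((g \<otimes> I (Cd f)) \<cdot> (I (Dm g) \<otimes> f)))"
proof -
  assume a: "f \<in> Ar" "h \<in> Ar" "g \<in> Ar" "Cd g = IH (Cd f) (Dm h)"
  have "ev (Dm f) (Cd h) \<cdot> ((hm f h \<cdot> g) \<otimes> I (Dm f)) = ev (Dm f) (Cd h) \<cdot> ((hm f h \<otimes> I (Dm f)) \<cdot> (g \<otimes> I (Dm f)))"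
    using a by (simp add: mate_cmp)
  also have "\<dots> = h \<cdot> (ev (Cd f) (Dm h) \<cdot> ((I (IH (Cd f) (Dm h)) \<otimes> f) \<cdot> (g \<otimes> I (Dm f))))"
    using a by (simp add: cont[OF hm_ev])
  also have "(I (IH (Cd f) (Dm h)) \<otimes> f) \<cdot> (g \<otimes> I (Dm f)) = g \<otimes> f"
    using a interchange[of g "I (IH (Cd f) (Dm h))" "I (Dm f)" f] by simp
  also have "g \<otimes> f = (g \<otimes> I (Cd f)) \<cdot> (I (Dm g) \<otimes> f)"
    using a interchange[of "I (Dm g)" g f "I (Cd f)"] by simp
  finally show ?thesis .
qed
lemma mate_hm: "f \<in> Ar \<Longrightarrow> h \<in> Ar \<Longrightarrow> g \<in> Ar \<Longrightarrow> Cd g = IH (Cd f) (Dm h) \<Longrightarrow> Dm f = X \<Longrightarrow> Cd h = Y \<Longrightarrow>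
   ev X Y \<cdot> ((hm f h \<cdot> g) \<otimes> I X) = h \<cdot> (ev (Cd f) (Dm h) \<cdot> ((g \<otimes> I (Cd f)) \<cdot> (I (Dm g) \<otimes> f)))"
  using mate_hm0 by blast

lemmas evs = hm_ev' cont[OF hm_ev'] cv_ev' cont[OF cv_ev']

lemma tI: "X \<in> Ob \<Longrightarrow> f \<in> Ar \<Longrightarrow> g \<in> Ar \<Longrightarrow> Cd f = Dm g \<Longrightarrow> (I X \<otimes> g) \<cdot> (I X \<otimes> f) = I X \<otimes> (g \<cdot> f)"
  using interchange[of "I X" "I X" f g] by simp
lemma It: "X \<in> Ob \<Longrightarrow> f \<in> Ar \<Longrightarrow> g \<in> Ar \<Longrightarrow> Cd f = Dm g \<Longrightarrow> (g \<otimes> I X) \<cdot> (f \<otimes> I X) = (g \<cdot> f) \<otimes> I X"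
  using interchange[of f g "I X" "I X"] by simp
lemma split1: "f \<in> Ar \<Longrightarrow> g \<in> Ar \<Longrightarrow> f \<otimes> g = (f \<otimes> I (Cd g)) \<cdot> (I (Dm f) \<otimes> g)"
  using interchange[of "I (Dm f)" f g "I (Cd g)"] by simp
lemma split2: "f \<in> Ar \<Longrightarrow> g \<in> Ar \<Longrightarrow> f \<otimes> g = (I (Cd f) \<otimes> g) \<cdot> (f \<otimes> I (Dm g))"
  using interchange[of f "I (Cd f)" "I (Dm g)" g] by simp

lemma hm_id[simp]: "X \<in> Ob \<Longrightarrow> Y \<in> Ob \<Longrightarrow> hm (I X) (I Y) = I (IH X Y)"
  by (rule mate_unique[of X Y]) (simp_all add: hm_ev')

lemma hm_comp: assumes a: "f \<in> Ar" "f' \<in> Ar" "h \<in> Ar" "h' \<in> Ar" "Cd f = Dm f'" "Cd h' = Dm h"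
  shows "hm f h \<cdot> hm f' h' = hm (f' \<cdot> f) (h \<cdot> h')"
proof (rule mate_unique[of "Dm f" "Cd h"])
  have "ev (Dm f) (Cd h) \<cdot> ((hm f h \<cdot> hm f' h') \<otimes> I (Dm f)) =
     h \<cdot> (ev (Cd f) (Dm h) \<cdot> ((hm f' h' \<otimes> I (Cd f)) \<cdot> (I (Dm (hm f' h')) \<otimes> f)))"
    using a by (simp add: mate_hm)
  also have "\<dots> = h \<cdot> (h' \<cdot> (ev (Cd f') (Dm h') \<cdot> ((I (IH (Cd f') (Dm h')) \<otimes> f') \<cdot> (I (IH (Cd f') (Dm h')) \<otimes> f))))"
    using a by (simp add: cont[OF hm_ev'])
  also have "\<dots> = (h \<cdot> h') \<cdot> (ev (Cd f') (Dm h') \<cdot> (I (IH (Cd f') (Dm h')) \<otimes> (f' \<cdot> f)))"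
    using a by (simp add: tI)
  also have "\<dots> = ev (Dm f) (Cd h) \<cdot> (hm (f' \<cdot> f) (h \<cdot> h') \<otimes> I (Dm f))"
    using a by (simp add: hm_ev')
  finally show "ev (Dm f) (Cd h) \<cdot> ((hm f h \<cdot> hm f' h') \<otimes> I (Dm f)) = ev (Dm f) (Cd h) \<cdot> (hm (f' \<cdot> f) (h \<cdot> h') \<otimes> I (Dm f))" .
qed (use a in simp_all)

lemma triangle: "X \<in> Ob \<Longrightarrow> Y \<in> Ob \<Longrightarrow> hm (I X) (ev X Y) \<cdot> cv X (IH X Y) = I (IH X Y)"
proof (rule mate_unique[of X Y])
  assume a: "X \<in> Ob" "Y \<in> Ob"
  show "ev X Y \<cdot> ((hm (I X) (ev X Y) \<cdot> cv X (IH X Y)) \<otimes> I X) = ev X Y \<cdot> (I (IH X Y) \<otimes> I X)"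
    using a by (simp add: mate_hm evs)
qed simp_all

lemma mate_cv: "X \<in> Ob \<Longrightarrow> h \<in> Ar \<Longrightarrow> k \<in> Ar \<Longrightarrow> Dm h = Cd k \<odot> X \<Longrightarrow>
   ev X (Cd h) \<cdot> ((hm (I X) h \<cdot> (cv X (Cd k) \<cdot> k)) \<otimes> I X) = h \<cdot> (k \<otimes> I X)"
  apply (simp add: mate_hm) by (simp add: mate_cmp evs)


abbreviation Hp where "Hp Y X \<equiv> (I (TO Y) \<otimes> M X) \<cdot> T2 Y (TO X)"

end

locale anti = ctx +
  fixes s assumes LA: "left_antipode C L B s"
begin

lemmas LA' = LA[unfolded left_antipode_def hom_def]
lemma s_prop: "X \<in> Ob \<Longrightarrow> Y \<in> Ob \<Longrightarrow> s X Y \<in> Ar \<and> Dm (s X Y) = TO (IH (TO X) Y) \<and> Cd (s X Y) = IH X (TO Y)"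
  using LA'[THEN conjunct1] by blast
lemma s_arr[simp]: "X \<in> Ob \<Longrightarrow> Y \<in> Ob \<Longrightarrow> s X Y \<in> Ar"
  and s_dm[simp]: "X \<in> Ob \<Longrightarrow> Y \<in> Ob \<Longrightarrow> Dm (s X Y) = TO (IH (TO X) Y)"
  and s_cd[simp]: "X \<in> Ob \<Longrightarrow> Y \<in> Ob \<Longrightarrow> Cd (s X Y) = IH X (TO Y)" using s_prop by blast+
lemma s_nat: "f \<in> Ar \<Longrightarrow> g \<in> Ar \<Longrightarrow> hm f (T g) \<cdot> s (Cd f) (Dm g) = s (Dm f) (Cd g) \<cdot> T (hm (T f) g)"
  using LA'[THEN conjunct2, THEN conjunct1] by blast
lemma ax1: "X \<in> Ob \<Longrightarrow> Y \<in> Ob \<Longrightarrow> T (ev X Y \<cdot> (hm (E X) (I Y) \<otimes> I X)) =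
       ev (TO X) (TO Y) \<cdot> ((s (TO X) Y \<cdot> T (hm (M X) (I Y))) \<otimes> I (TO X)) \<cdot> T2 (IH (TO X) Y) X"
  using LA'[THEN conjunct2, THEN conjunct2, THEN conjunct1] by blast
lemma ax2: "X \<in> Ob \<Longrightarrow> Y \<in> Ob \<Longrightarrow> hm (I X) (I (TO Y) \<otimes> E X) \<cdot> cv X (TO Y) =
       hm (I X) (Hp Y X) \<cdot> (s X (Y \<odot> TO X) \<cdot> T (cv (TO X) Y))"
  using LA'[THEN conjunct2, THEN conjunct2, THEN conjunct2] by blast

definition sg where "sg X Y = ev X (TO Y) \<cdot> (s X Y \<otimes> I X)"
lemma sg_arr[simp]: "X \<in> Ob \<Longrightarrow> Y \<in> Ob \<Longrightarrow> sg X Y \<in> Ar"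
  and sg_dm[simp]: "X \<in> Ob \<Longrightarrow> Y \<in> Ob \<Longrightarrow> Dm (sg X Y) = TO (IH (TO X) Y) \<odot> X"
  and sg_cd[simp]: "X \<in> Ob \<Longrightarrow> Y \<in> Ob \<Longrightarrow> Cd (sg X Y) = TO Y" unfolding sg_def by simp_all
lemma sg_fold: "ev X Z \<cdot> (s X Y \<otimes> I X) = sg X Y" if "Z = TO Y" using that sg_def by simp
lemmas sgf = sg_fold cont[OF sg_fold]

lemma sg_cmp: "X \<in> Ob \<Longrightarrow> Y \<in> Ob \<Longrightarrow> k \<in> Ar \<Longrightarrow> Cd k = TO (IH (TO X) Y) \<Longrightarrow>
  ev X (TO Y) \<cdot> ((s X Y \<cdot> k) \<otimes> I X) = sg X Y \<cdot> (k \<otimes> I X)"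
  by (simp add: mate_cmp sgf)
lemmas sgc = sg_cmp cont[OF sg_cmp]

lemma N1: "X \<in> Ob \<Longrightarrow> g \<in> Ar \<Longrightarrow> T g \<cdot> sg X (Dm g) = sg X (Cd g) \<cdot> (T (hm (I (TO X)) g) \<otimes> I X)"
proof -
  assume a: "X \<in> Ob" "g \<in> Ar"
  have e: "hm (I X) (T g) \<cdot> s X (Dm g) = s X (Cd g) \<cdot> T (hm (I (TO X)) g)"
    using s_nat[of "I X" g] a by simp
  have "T g \<cdot> sg X (Dm g) = ev X (TO (Cd g)) \<cdot> ((hm (I X) (T g) \<cdot> s X (Dm g)) \<otimes> I X)"
    using a by (simp add: mate_hm sgf)
  also have "\<dots> = sg X (Cd g) \<cdot> (T (hm (I (TO X)) g) \<otimes> I X)"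
    unfolding e using a by (simp add: sg_cmp)
  finally show ?thesis .
qed

lemma N2: "f \<in> Ar \<Longrightarrow> Y \<in> Ob \<Longrightarrow> sg (Cd f) Y \<cdot> (I (TO (IH (TO (Cd f)) Y)) \<otimes> f) = sg (Dm f) Y \<cdot> (T (hm (T f) (I Y)) \<otimes> I (Dm f))"
proof -
  assume a: "f \<in> Ar" "Y \<in> Ob"
  have e: "hm f (I (TO Y)) \<cdot> s (Cd f) Y = s (Dm f) Y \<cdot> T (hm (T f) (I Y))"
    using s_nat[of f "I Y"] a by simp
  have "sg (Cd f) Y \<cdot> (I (TO (IH (TO (Cd f)) Y)) \<otimes> f) = ev (Dm f) (TO Y) \<cdot> ((hm f (I (TO Y)) \<cdot> s (Cd f) Y) \<otimes> I (Dm f))"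
    using a by (simp add: mate_hm sgf)
  also have "\<dots> = sg (Dm f) Y \<cdot> (T (hm (T f) (I Y)) \<otimes> I (Dm f))"
    unfolding e using a by (simp add: sg_cmp)
  finally show ?thesis .
qed

lemma AX1: "X \<in> Ob \<Longrightarrow> Y \<in> Ob \<Longrightarrow> T (ev X Y \<cdot> (hm (E X) (I Y) \<otimes> I X)) =
       sg (TO X) Y \<cdot> ((T (hm (M X) (I Y)) \<otimes> I (TO X)) \<cdot> T2 (IH (TO X) Y) X)"
  by (simp add: ax1 sgc)

lemma A2: "X \<in> Ob \<Longrightarrow> Y \<in> Ob \<Longrightarrow> Hp Y X \<cdot> (sg X (Y \<odot> TO X) \<cdot> (T (cv (TO X) Y) \<otimes> I X)) = I (TO Y) \<otimes> E X"
proof -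
  assume a: "X \<in> Ob" "Y \<in> Ob"
  have "I (TO Y) \<otimes> E X = ev X (TO Y \<odot> TO X) \<cdot> ((hm (I X) (I (TO Y) \<otimes> E X) \<cdot> (cv X (TO Y) \<cdot> I (TO Y))) \<otimes> I X)"
    using a mate_cv[of X "I (TO Y) \<otimes> E X" "I (TO Y)"] by simp
  also have "\<dots> = ev X (TO Y \<odot> TO X) \<cdot> ((hm (I X) (Hp Y X) \<cdot> (s X (Y \<odot> TO X) \<cdot> T (cv (TO X) Y))) \<otimes> I X)"
    using a ax2 by simp
  also have "\<dots> = Hp Y X \<cdot> (sg X (Y \<odot> TO X) \<cdot> (T (cv (TO X) Y) \<otimes> I X))"
    using a apply (simp add: mate_hm) by (simp add: sg_cmp)
  finally show ?thesis by simp
qed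


lemma L1: assumes X: "X \<in> Ob" and Y: "Y \<in> Ob"
  shows "sg (TO X) Y \<cdot> ((T (hm (M X) (I Y)) \<otimes> M X) \<cdot> T2 (IH (TO X) Y) (TO X)) = T (ev (TO X) Y)"
proof -
  let ?a = "hm (M X) (I Y)" and ?b = "hm (T (M X)) (I Y)" and ?c = "hm (M (TO X)) (I Y)"
  let ?P = "IH (TO X) Y" and ?P2 = "IH (TO (TO X)) Y"
  have s1: "T ?a \<otimes> M X = (I (TO ?P2) \<otimes> M X) \<cdot> (T ?a \<otimes> I (TO (TO X)))"
    using X Y split2[of "T ?a" "M X"] by simp
  have s2: "sg (TO X) Y \<cdot> (I (TO ?P2) \<otimes> M X) = sg (TO (TO X)) Y \<cdot> (T ?b \<otimes> I (TO (TO X)))"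
    using X Y N2[of "M X" Y] by simp
  have ba: "?b \<cdot> ?a = ?c \<cdot> ?a"
    using X Y by (simp add: hm_comp M_assoc)
  have s4: "(T ?b \<otimes> I (TO (TO X))) \<cdot> (T ?a \<otimes> I (TO (TO X))) = (T ?c \<otimes> I (TO (TO X))) \<cdot> (T ?a \<otimes> I (TO (TO X)))"
    using X Y by (simp add: It T_cmp[symmetric] ba)
  have s5: "(T ?a \<otimes> I (TO (TO X))) \<cdot> T2 ?P (TO X) = T2 ?P2 (TO X) \<cdot> T (?a \<otimes> I (TO X))"
    using X Y T2_nat[of ?a "I (TO X)"] by simp
  have s6: "sg (TO (TO X)) Y \<cdot> ((T ?c \<otimes> I (TO (TO X))) \<cdot> T2 ?P2 (TO X)) = T (ev (TO X) Y \<cdot> (hm (E (TO X)) (I Y) \<otimes> I (TO X)))"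
    using X Y AX1[of "TO X" Y] by simp
  have s7: "hm (E (TO X)) (I Y) \<cdot> ?a = I ?P"
    using X Y by (simp add: hm_comp)
  have "sg (TO X) Y \<cdot> ((T ?a \<otimes> M X) \<cdot> T2 ?P (TO X)) =
     sg (TO X) Y \<cdot> (I (TO ?P2) \<otimes> M X) \<cdot> (T ?a \<otimes> I (TO (TO X))) \<cdot> T2 ?P (TO X)"
    using X Y by (simp add: s1)
  also have "\<dots> = sg (TO (TO X)) Y \<cdot> (T ?b \<otimes> I (TO (TO X))) \<cdot> (T ?a \<otimes> I (TO (TO X))) \<cdot> T2 ?P (TO X)"
    using X Y by (simp add: cont[OF s2])
  also have "\<dots> = sg (TO (TO X)) Y \<cdot> (T ?c \<otimes> I (TO (TO X))) \<cdot> (T ?a \<otimes> I (TO (TO X))) \<cdot> T2 ?P (TO X)"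
    using X Y by (simp add: cont[OF s4])
  also have "\<dots> = sg (TO (TO X)) Y \<cdot> (T ?c \<otimes> I (TO (TO X))) \<cdot> T2 ?P2 (TO X) \<cdot> T (?a \<otimes> I (TO X))"
    using X Y by (simp add: s5)
  also have "\<dots> = T (ev (TO X) Y \<cdot> (hm (E (TO X)) (I Y) \<otimes> I (TO X))) \<cdot> T (?a \<otimes> I (TO X))"
    using X Y by (simp add: cont2[OF s6])
  also have "\<dots> = T (ev (TO X) Y \<cdot> ((hm (E (TO X)) (I Y) \<cdot> ?a) \<otimes> I (TO X)))"
    using X Y by (simp add: T_cmp It[symmetric])
  also have "\<dots> = T (ev (TO X) Y)"
    using X Y by (simp add: s7)
  finally show ?thesis .
qed


definition Gs where "Gs A X = sg (TO X) (A \<odot> TO X) \<cdot> ((T (hm (M X) (I (A \<odot> TO X))) \<otimes> I (TO X)) \<cdot> (T (cv (TO X) A) \<otimes> I (TO X)))"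
lemma Gs_arr[simp]: "A \<in> Ob \<Longrightarrow> X \<in> Ob \<Longrightarrow> Gs A X \<in> Ar"
  and Gs_dm[simp]: "A \<in> Ob \<Longrightarrow> X \<in> Ob \<Longrightarrow> Dm (Gs A X) = TO A \<odot> TO X"
  and Gs_cd[simp]: "A \<in> Ob \<Longrightarrow> X \<in> Ob \<Longrightarrow> Cd (Gs A X) = TO (A \<odot> TO X)"
  unfolding Gs_def by simp_all

lemma GH: assumes A: "A \<in> Ob" and X: "X \<in> Ob" shows "Gs A X \<cdot> Hp A X = I (TO (A \<odot> TO X))"
proof -
  let ?Y = "A \<odot> TO X"
  let ?a = "hm (M X) (I ?Y)" and ?k = "cv (TO X) A" and ?P = "IH (TO X) ?Y"
  have e1: "(T ?k \<otimes> I (TO X)) \<cdot> (I (TO A) \<otimes> M X) = (I (TO ?P) \<otimes> M X) \<cdot> (T ?k \<otimes> I (TO (TO X)))"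
    using A X interchange[of "I (TO A)" "T ?k" "M X" "I (TO X)"] interchange[of "T ?k" "I (TO ?P)" "I (TO (TO X))" "M X"] by simp
  have e2: "(T ?a \<otimes> I (TO X)) \<cdot> (I (TO ?P) \<otimes> M X) = T ?a \<otimes> M X"
    using A X interchange[of "I (TO ?P)" "T ?a" "M X" "I (TO X)"] by simp
  have e3: "(T ?k \<otimes> I (TO (TO X))) \<cdot> T2 A (TO X) = T2 ?P (TO X) \<cdot> T (?k \<otimes> I (TO X))"
    using A X T2_nat[of ?k "I (TO X)"] by simp
  have "Gs A X \<cdot> Hp A X = sg (TO X) ?Y \<cdot> (T ?a \<otimes> I (TO X)) \<cdot> (I (TO ?P) \<otimes> M X) \<cdot> (T ?k \<otimes> I (TO (TO X))) \<cdot> T2 A (TO X)"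
    unfolding Gs_def using A X by (simp add: cont[OF e1])
  also have "\<dots> = sg (TO X) ?Y \<cdot> (T ?a \<otimes> M X) \<cdot> T2 ?P (TO X) \<cdot> T (?k \<otimes> I (TO X))"
    using A X by (simp add: cont[OF e2] e3)
  also have "\<dots> = T (ev (TO X) ?Y) \<cdot> T (?k \<otimes> I (TO X))"
    using A X by (simp add: cont2[OF L1])
  also have "\<dots> = I (TO ?Y)"
    using A X by (simp add: T_cmp[symmetric] cv_ev')
  finally show ?thesis .
qed

lemma Recon: assumes X: "X \<in> Ob" and Z: "Z \<in> Ob"
  shows "sg X Z = T (ev (TO X) Z) \<cdot> (sg X (IH (TO X) Z \<odot> TO X) \<cdot> (T (cv (TO X) (IH (TO X) Z)) \<otimes> I X))"
proof -
  have n: "T (ev (TO X) Z) \<cdot> sg X (IH (TO X) Z \<odot> TO X) = sg X Z \<cdot> (T (hm (I (TO X)) (ev (TO X) Z)) \<otimes> I X)"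
    using X Z N1[of X "ev (TO X) Z"] by simp
  have "T (ev (TO X) Z) \<cdot> (sg X (IH (TO X) Z \<odot> TO X) \<cdot> (T (cv (TO X) (IH (TO X) Z)) \<otimes> I X)) =
     sg X Z \<cdot> (T (hm (I (TO X)) (ev (TO X) Z)) \<otimes> I X) \<cdot> (T (cv (TO X) (IH (TO X) Z)) \<otimes> I X)"
    using X Z by (simp add: cont[OF n])
  also have "\<dots> = sg X Z"
    using X Z by (simp add: It T_cmp[symmetric] triangle)
  finally show ?thesis by simp
qed

lemma left_cancel: assumes X: "X \<in> Ob" and Y: "Y \<in> Ob" and w: "w \<in> Ar" "Cd w = TO (Y \<odot> TO X)"
    and h: "Hp Y X \<cdot> w = I (TO Y) \<otimes> E X"
  shows "w = Gs Y X \<cdot> (I (TO Y) \<otimes> E X)"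
proof -
  have "w = (Gs Y X \<cdot> Hp Y X) \<cdot> w"
    using X Y w by (simp only: GH) simp
  also have "\<dots> = Gs Y X \<cdot> (Hp Y X \<cdot> w)"
    using X Y w by simp
  finally show ?thesis using h by simp
qed

lemma uniq: assumes a: "left_antipode C L B s'" and X: "X \<in> Ob" and Y: "Y \<in> Ob"
  shows "s' X Y = s X Y"
proof -
  interpret s': anti C L B s' using SM LC BM a by unfold_locales
  have k: "s'.sg X (Z \<odot> TO X) \<cdot> (T (cv (TO X) Z) \<otimes> I X) = sg X (Z \<odot> TO X) \<cdot> (T (cv (TO X) Z) \<otimes> I X)"
    if Z: "Z \<in> Ob" for Z
  proof -
    have 1: "s'.sg X (Z \<odot> TO X) \<cdot> (T (cv (TO X) Z) \<otimes> I X) = Gs Z X \<cdot> (I (TO Z) \<otimes> E X)"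
      by (rule left_cancel[OF X Z _ _ s'.A2[OF X Z]]) (use X Z in simp_all)
    have 2: "sg X (Z \<odot> TO X) \<cdot> (T (cv (TO X) Z) \<otimes> I X) = Gs Z X \<cdot> (I (TO Z) \<otimes> E X)"
      by (rule left_cancel[OF X Z _ _ A2[OF X Z]]) (use X Z in simp_all)
    show ?thesis unfolding 1 2 ..
  qed
  have "s'.sg X Y = sg X Y"
    apply (subst s'.Recon[OF X Y])
    apply (subst Recon[OF X Y])
    apply (subst k)
    using X Y by simp_all
  then have e: "ev X (TO Y) \<cdot> (s' X Y \<otimes> I X) = ev X (TO Y) \<cdot> (s X Y \<otimes> I X)"
    unfolding sg_def s'.sg_def .
  show ?thesis by (rule mate_unique[OF X _ _ _ _ _ _ e]) (use X Y in simp_all)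
qed

end



context ctx begin

lemma xI: "f \<in> Ar \<Longrightarrow> g \<in> Ar \<Longrightarrow> P = Cd f \<Longrightarrow> Q = Dm g \<Longrightarrow> (I P \<otimes> g) \<cdot> (f \<otimes> I Q) = f \<otimes> g"
proof -
  assume a: "f \<in> Ar" "g \<in> Ar" "P = Cd f" "Q = Dm g"
  have "(I P \<otimes> g) \<cdot> (f \<otimes> I Q) = (I P \<cdot> f) \<otimes> (g \<cdot> I Q)"
    by (rule interchange[symmetric]) (use a in simp_all)
  then show ?thesis using a by simp
qed
lemma Ix: "f \<in> Ar \<Longrightarrow> g \<in> Ar \<Longrightarrow> P = Dm f \<Longrightarrow> Q = Cd g \<Longrightarrow> (f \<otimes> I Q) \<cdot> (I P \<otimes> g) = f \<otimes> g"
proof -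
  assume a: "f \<in> Ar" "g \<in> Ar" "P = Dm f" "Q = Cd g"
  have "(f \<otimes> I Q) \<cdot> (I P \<otimes> g) = (f \<cdot> I P) \<otimes> (I Q \<cdot> g)"
    by (rule interchange[symmetric]) (use a in simp_all)
  then show ?thesis using a by simp
qed
lemma tI': "f \<in> Ar \<Longrightarrow> g \<in> Ar \<Longrightarrow> Cd f = Dm g \<Longrightarrow> X \<in> Ob \<Longrightarrow> (I X \<otimes> g) \<cdot> (I X \<otimes> f) = I X \<otimes> (g \<cdot> f)"
  using tI by simp
lemma It': "f \<in> Ar \<Longrightarrow> g \<in> Ar \<Longrightarrow> Cd f = Dm g \<Longrightarrow> X \<in> Ob \<Longrightarrow> (g \<otimes> I X) \<cdot> (f \<otimes> I X) = (g \<cdot> f) \<otimes> I X"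
  using It by simp
lemmas tens = xI cont[OF xI] Ix cont[OF Ix] tI' cont[OF tI'] It' cont[OF It']

lemma HN: assumes f: "f \<in> Ar" and X: "X \<in> Ob"
  shows "Hp (Cd f) X \<cdot> T (f \<otimes> I (TO X)) = (T f \<otimes> I (TO X)) \<cdot> Hp (Dm f) X"
proof -
  have "Hp (Cd f) X \<cdot> T (f \<otimes> I (TO X)) = (I (TO (Cd f)) \<otimes> M X) \<cdot> (T f \<otimes> I (TO (TO X))) \<cdot> T2 (Dm f) (TO X)"
    using f X T2_nat[of f "I (TO X)"] by simp
  also have "\<dots> = (T f \<otimes> I (TO X)) \<cdot> (I (TO (Dm f)) \<otimes> M X) \<cdot> T2 (Dm f) (TO X)"
  proof -
    have e: "(I (TO (Cd f)) \<otimes> M X) \<cdot> (T f \<otimes> I (TO (TO X))) = (T f \<otimes> I (TO X)) \<cdot> (I (TO (Dm f)) \<otimes> M X)"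
      using f X xI[of "T f" "M X"] Ix[of "T f" "M X"] by simp
    show ?thesis using f X by (simp add: cont[OF e])
  qed
  finally show ?thesis .
qed

lemma HM: assumes A: "A \<in> Ob" and X: "X \<in> Ob"
  shows "Hp A X \<cdot> M (A \<odot> TO X) = (M A \<otimes> I (TO X)) \<cdot> Hp (TO A) X \<cdot> T (Hp A X)"
proof -
  have "Hp A X \<cdot> M (A \<odot> TO X) = (I (TO A) \<otimes> M X) \<cdot> (M A \<otimes> M (TO X)) \<cdot> T2 (TO A) (TO (TO X)) \<cdot> T (T2 A (TO X))"
    using A X by (simp add: M_comon)
  also have "\<dots> = (M A \<otimes> (M X \<cdot> M (TO X))) \<cdot> T2 (TO A) (TO (TO X)) \<cdot> T (T2 A (TO X))"
    using A X interchange[of "M A" "I (TO A)" "M (TO X)" "M X"] by simp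
  also have "\<dots> = (M A \<otimes> (M X \<cdot> T (M X))) \<cdot> T2 (TO A) (TO (TO X)) \<cdot> T (T2 A (TO X))"
    using A X by (simp add: M_assoc)
  also have "\<dots> = (M A \<otimes> M X) \<cdot> (I (TO (TO A)) \<otimes> T (M X)) \<cdot> T2 (TO A) (TO (TO X)) \<cdot> T (T2 A (TO X))"
    using A X interchange[of "I (TO (TO A))" "M A" "T (M X)" "M X"] by simp
  also have "\<dots> = (M A \<otimes> M X) \<cdot> T2 (TO A) (TO X) \<cdot> T (I (TO A) \<otimes> M X) \<cdot> T (T2 A (TO X))"
  proof -
    have n: "T2 (TO A) (TO X) \<cdot> T (I (TO A) \<otimes> M X) = (I (TO (TO A)) \<otimes> T (M X)) \<cdot> T2 (TO A) (TO (TO X))"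
      using A X T2_nat[of "I (TO A)" "M X"] by simp
    show ?thesis using A X by (simp add: cont[OF n])
  qed
  also have "\<dots> = (M A \<otimes> I (TO X)) \<cdot> Hp (TO A) X \<cdot> T (Hp A X)"
  proof -
    have m: "(M A \<otimes> I (TO X)) \<cdot> (I (TO (TO A)) \<otimes> M X) = M A \<otimes> M X" using A X by (simp add: Ix)
    have t: "T ((I (TO A) \<otimes> M X) \<cdot> T2 A (TO X)) = T (I (TO A) \<otimes> M X) \<cdot> T (T2 A (TO X))" using A X by (simp add: T_cmp)
    show ?thesis using A X by (simp add: cont[OF m] t)
  qed
  finally show ?thesis .
qed

lemma HT0: assumes Q: "Q \<in> Ob" shows "(I (TO Q) \<otimes> T0) \<cdot> Hp Q U = T (I Q \<otimes> T0)"
proof -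
  have "(I (TO Q) \<otimes> T0) \<cdot> Hp Q U = (I (TO Q) \<otimes> (T0 \<cdot> M U)) \<cdot> T2 Q (TO U)"
    using Q by (simp add: cont[OF tI])
  also have "\<dots> = (I (TO Q) \<otimes> (T0 \<cdot> T T0)) \<cdot> T2 Q (TO U)"
    using Q by (simp add: M_T0)
  also have "\<dots> = (I (TO Q) \<otimes> T0) \<cdot> (I (TO Q) \<otimes> T T0) \<cdot> T2 Q (TO U)"
    using Q by (simp add: cont[OF tI])
  also have "\<dots> = (I (TO Q) \<otimes> T0) \<cdot> T2 Q U \<cdot> T (I Q \<otimes> T0)"
    using Q T2_nat[of "I Q" T0] by simp
  also have "\<dots> = T (I Q \<otimes> T0)"
    using Q by (simp add: cont[OF T2_counit(2)])
  finally show ?thesis .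
qed

end

locale hopf = anti + assumes LH: "left_hopf C B"
begin

lemma HGn: assumes A: "A \<in> Ob" and X: "X \<in> Ob"
  shows "(I (TO A) \<otimes> M X) \<cdot> (T2 A (TO X) \<cdot> Gs A X) = I (TO A \<odot> TO X)"
proof -
  have "iso C (Hp A X)" using LH A X unfolding left_hopf_def by blast
  then obtain g where g: "g \<in> Ar" "Dm g = TO A \<odot> TO X" "Cd g = TO (A \<odot> TO X)"
    "g \<cdot> Hp A X = I (TO (A \<odot> TO X))" "Hp A X \<cdot> g = I (TO A \<odot> TO X)"
    unfolding iso_def hom_def using A X by auto
  have "Gs A X = Gs A X \<cdot> (Hp A X \<cdot> g)" using g A X by simp
  also have "\<dots> = (Gs A X \<cdot> Hp A X) \<cdot> g" using g A X by simp
  also have "\<dots> = g" using g A X GH by simp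
  finally have "Gs A X = g" .
  then show ?thesis using g A X by simp
qed
lemmas HGc = HGn cont2[OF HGn]

lemma HNn: "f \<in> Ar \<Longrightarrow> X \<in> Ob \<Longrightarrow> (I (TO (Cd f)) \<otimes> M X) \<cdot> (T2 (Cd f) (TO X) \<cdot> T (f \<otimes> I (TO X))) =
   (T f \<otimes> I (TO X)) \<cdot> ((I (TO (Dm f)) \<otimes> M X) \<cdot> T2 (Dm f) (TO X))"
  using HN by simp

lemma GN: assumes f: "f \<in> Ar" and X: "X \<in> Ob"
  shows "Gs (Cd f) X \<cdot> (T f \<otimes> I (TO X)) = T (f \<otimes> I (TO X)) \<cdot> Gs (Dm f) X"
proof -
  have "Gs (Cd f) X \<cdot> (T f \<otimes> I (TO X)) = Gs (Cd f) X \<cdot> (T f \<otimes> I (TO X)) \<cdot> (I (TO (Dm f)) \<otimes> M X) \<cdot> T2 (Dm f) (TO X) \<cdot> Gs (Dm f) X"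
    using f X by (simp add: HGc)
  also have "\<dots> = Gs (Cd f) X \<cdot> (I (TO (Cd f)) \<otimes> M X) \<cdot> T2 (Cd f) (TO X) \<cdot> T (f \<otimes> I (TO X)) \<cdot> Gs (Dm f) X"
    using f X by (simp add: cont2[OF HNn[symmetric]])
  also have "\<dots> = T (f \<otimes> I (TO X)) \<cdot> Gs (Dm f) X"
    using f X by (simp add: cont2[OF GH])
  finally show ?thesis .
qed

lemma S1: assumes X: "X \<in> Ob" and Y: "Y \<in> Ob"
  shows "sg X Y = sg (TO X) Y \<cdot> (T (hm (M X) (I Y)) \<otimes> E X)"
proof -
  let ?a = "hm (M X) (I Y)" and ?b = "hm (T (E X)) (I Y)"
  have e1: "T ?a \<otimes> E X = (I (TO (IH (TO (TO X)) Y)) \<otimes> E X) \<cdot> (T ?a \<otimes> I X)"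
    using X Y xI[of "T ?a" "E X"] by simp
  have e2: "sg (TO X) Y \<cdot> (I (TO (IH (TO (TO X)) Y)) \<otimes> E X) = sg X Y \<cdot> (T ?b \<otimes> I X)"
    using X Y N2[of "E X" Y] by simp
  have e3: "?b \<cdot> ?a = I (IH (TO X) Y)"
    using X Y by (simp add: hm_comp)
  have e4: "(T ?b \<otimes> I X) \<cdot> (T ?a \<otimes> I X) = I (TO (IH (TO X) Y) \<odot> X)"
    using X Y by (simp add: It T_cmp[symmetric] e3)
  have "sg (TO X) Y \<cdot> (T ?a \<otimes> E X) = sg (TO X) Y \<cdot> (I (TO (IH (TO (TO X)) Y)) \<otimes> E X) \<cdot> (T ?a \<otimes> I X)"
    using X Y by (simp add: e1)
  also have "\<dots> = sg X Y \<cdot> (T ?b \<otimes> I X) \<cdot> (T ?a \<otimes> I X)"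
    using X Y by (simp add: cont[OF e2])
  also have "\<dots> = sg X Y"
    using X Y by (simp add: e4)
  finally show ?thesis by simp
qed

lemma KG: assumes X: "X \<in> Ob" and Y: "Y \<in> Ob"
  shows "sg (TO X) Y \<cdot> (T (hm (M X) (I Y)) \<otimes> I (TO X)) = T (ev (TO X) Y) \<cdot> Gs (IH (TO X) Y) X"
proof -
  let ?a = "hm (M X) (I Y)" and ?P = "IH (TO X) Y"
  have e: "(T ?a \<otimes> I (TO X)) \<cdot> (I (TO ?P) \<otimes> M X) = T ?a \<otimes> M X"
    using X Y Ix[of "T ?a" "M X"] by simp
  have "sg (TO X) Y \<cdot> (T ?a \<otimes> I (TO X)) = sg (TO X) Y \<cdot> (T ?a \<otimes> I (TO X)) \<cdot> (I (TO ?P) \<otimes> M X) \<cdot> T2 ?P (TO X) \<cdot> Gs ?P X"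
    using X Y by (simp add: HGc)
  also have "\<dots> = sg (TO X) Y \<cdot> (T ?a \<otimes> M X) \<cdot> T2 ?P (TO X) \<cdot> Gs ?P X"
    using X Y by (simp add: cont[OF e])
  also have "\<dots> = T (ev (TO X) Y) \<cdot> Gs ?P X"
    using X Y by (simp add: cont2[OF L1])
  finally show ?thesis .
qed

lemma SF: assumes X: "X \<in> Ob" and Y: "Y \<in> Ob"
  shows "sg X Y = T (ev (TO X) Y) \<cdot> (Gs (IH (TO X) Y) X \<cdot> (I (TO (IH (TO X) Y)) \<otimes> E X))"
proof -
  let ?a = "hm (M X) (I Y)" and ?P = "IH (TO X) Y"
  have e: "T ?a \<otimes> E X = (T ?a \<otimes> I (TO X)) \<cdot> (I (TO ?P) \<otimes> E X)"
    using X Y Ix[of "T ?a" "E X"] by simp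
  have "sg X Y = sg (TO X) Y \<cdot> (T ?a \<otimes> I (TO X)) \<cdot> (I (TO ?P) \<otimes> E X)"
    using X Y S1[OF X Y] e by simp
  also have "\<dots> = T (ev (TO X) Y) \<cdot> (Gs ?P X \<cdot> (I (TO ?P) \<otimes> E X))"
    using X Y by (simp add: cont[OF KG])
  finally show ?thesis .
qed


lemma B2: assumes X: "X \<in> Ob" and Y: "Y \<in> Ob"
  shows "s X Y \<cdot> E (IH (TO X) Y) = hm (E X) (E Y)"
proof -
  let ?P = "IH (TO X) Y"
  have h1: "Hp ?P X \<cdot> E (?P \<odot> TO X) = E ?P \<otimes> I (TO X)"
  proof -
    have "Hp ?P X \<cdot> E (?P \<odot> TO X) = (I (TO ?P) \<otimes> M X) \<cdot> (E ?P \<otimes> E (TO X))"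
      using X Y by (simp add: E_comon)
    also have "\<dots> = (I (TO ?P) \<cdot> E ?P) \<otimes> (M X \<cdot> E (TO X))"
      by (rule interchange[symmetric]) (use X Y in simp_all)
    finally show ?thesis using X Y by simp
  qed
  have h2: "E ?P \<otimes> E X = (E ?P \<otimes> I (TO X)) \<cdot> (I ?P \<otimes> E X)"
    using X Y Ix[of "E ?P" "E X"] by simp
  have e: "Gs ?P X \<cdot> (E ?P \<otimes> E X) = E (?P \<odot> TO X) \<cdot> (I ?P \<otimes> E X)"
  proof -
    have "Gs ?P X \<cdot> (E ?P \<otimes> E X) = Gs ?P X \<cdot> (Hp ?P X \<cdot> E (?P \<odot> TO X)) \<cdot> (I ?P \<otimes> E X)"
      unfolding h1 h2 using X Y by simp
    also have "\<dots> = E (?P \<odot> TO X) \<cdot> (I ?P \<otimes> E X)"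
      using X Y by (simp add: cont2[OF GH])
    finally show ?thesis .
  qed
  have ee: "(I (TO ?P) \<otimes> E X) \<cdot> (E ?P \<otimes> I X) = E ?P \<otimes> E X"
    using X Y xI[of "E ?P" "E X"] by simp
  have en: "T (ev (TO X) Y) \<cdot> E (?P \<odot> TO X) = E Y \<cdot> ev (TO X) Y"
    using X Y E_nat[of "ev (TO X) Y"] by simp
  have "ev X (TO Y) \<cdot> ((s X Y \<cdot> E ?P) \<otimes> I X) = sg X Y \<cdot> (E ?P \<otimes> I X)"
    using X Y by (simp add: sg_cmp)
  also have "\<dots> = T (ev (TO X) Y) \<cdot> Gs ?P X \<cdot> (I (TO ?P) \<otimes> E X) \<cdot> (E ?P \<otimes> I X)"
    using X Y SF[OF X Y] by simp
  also have "\<dots> = T (ev (TO X) Y) \<cdot> E (?P \<odot> TO X) \<cdot> (I ?P \<otimes> E X)"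
    using X Y by (simp add: ee e)
  also have "\<dots> = E Y \<cdot> ev (TO X) Y \<cdot> (I ?P \<otimes> E X)"
    using X Y by (simp add: cont[OF en])
  also have "\<dots> = ev X (TO Y) \<cdot> (hm (E X) (E Y) \<otimes> I X)"
    using X Y by (simp add: hm_ev')
  finally have fin: "ev X (TO Y) \<cdot> ((s X Y \<cdot> E ?P) \<otimes> I X) = ev X (TO Y) \<cdot> (hm (E X) (E Y) \<otimes> I X)" .
  show ?thesis by (rule mate_unique[OF _ _ _ _ _ _ _ fin]) (use X Y in simp_all)
qed

lemma B4: assumes X: "X \<in> Ob"
  shows "ev U (TO X) \<cdot> (s U X \<cdot> T (hm T0 (I X))) = T (ev U X)"
proof -
  let ?h = "hm T0 (I X)" and ?Q = "IH U X" and ?P = "IH (TO U) X"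
  have h0: "?h \<in> Ar" "Dm ?h = ?Q" "Cd ?h = ?P" using X by simp_all
  have 1: "ev U (TO X) \<cdot> (s U X \<cdot> T ?h) = sg U X \<cdot> T ?h"
    using X sg_cmp[of U X "T ?h"] by simp
  have e1: "(I (TO ?P) \<otimes> E U) \<cdot> T ?h = (T ?h \<otimes> I (TO U)) \<cdot> (I (TO ?Q) \<otimes> E U)"
  proof -
    have "(I (TO ?P) \<otimes> E U) \<cdot> (T ?h \<otimes> I U) = T ?h \<otimes> E U" using X xI[of "T ?h" "E U"] by simp
    moreover have "(T ?h \<otimes> I (TO U)) \<cdot> (I (TO ?Q) \<otimes> E U) = T ?h \<otimes> E U" using X Ix[of "T ?h" "E U"] by simp
    ultimately show ?thesis using X by simp
  qed
  have gn: "Gs ?P U \<cdot> (T ?h \<otimes> I (TO U)) = T (?h \<otimes> I (TO U)) \<cdot> Gs ?Q U"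
    using GN[of ?h U] X by simp
  have ev1: "T (ev (TO U) X) \<cdot> T (?h \<otimes> I (TO U)) = T (ev U X) \<cdot> T (I ?Q \<otimes> T0)"
  proof -
    have "ev (TO U) X \<cdot> (?h \<otimes> I (TO U)) = ev U X \<cdot> (I ?Q \<otimes> T0)" using X by (simp add: hm_ev')
    then show ?thesis using X by (simp add: T_cmp[symmetric])
  qed
  have t0: "T (I ?Q \<otimes> T0) \<cdot> Gs ?Q U = I (TO ?Q) \<otimes> T0"
  proof -
    have "I (TO ?Q) \<otimes> T0 = (I (TO ?Q) \<otimes> T0) \<cdot> (I (TO ?Q) \<otimes> M U) \<cdot> T2 ?Q (TO U) \<cdot> Gs ?Q U"
      using X by (simp add: HGc)
    also have "\<dots> = T (I ?Q \<otimes> T0) \<cdot> Gs ?Q U"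
      using X by (simp add: cont2[OF HT0])
    finally show ?thesis ..
  qed
  have t1: "(I (TO ?Q) \<otimes> T0) \<cdot> (I (TO ?Q) \<otimes> E U) = I (TO ?Q)"
    using X tI[of "TO ?Q" "E U" T0] by (simp add: E_T0)
  have "sg U X \<cdot> T ?h = T (ev (TO U) X) \<cdot> Gs ?P U \<cdot> (I (TO ?P) \<otimes> E U) \<cdot> T ?h"
    using X SF[of U X] by simp
  also have "\<dots> = T (ev (TO U) X) \<cdot> Gs ?P U \<cdot> (T ?h \<otimes> I (TO U)) \<cdot> (I (TO ?Q) \<otimes> E U)"
    using X by (simp add: e1)
  also have "\<dots> = T (ev (TO U) X) \<cdot> T (?h \<otimes> I (TO U)) \<cdot> Gs ?Q U \<cdot> (I (TO ?Q) \<otimes> E U)"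
    using X by (simp add: cont[OF gn])
  also have "\<dots> = T (ev U X) \<cdot> T (I ?Q \<otimes> T0) \<cdot> Gs ?Q U \<cdot> (I (TO ?Q) \<otimes> E U)"
    using X by (simp add: cont[OF ev1])
  also have "\<dots> = T (ev U X)"
    using X by (simp add: cont[OF t0] t1)
  finally show ?thesis using 1 by simp
qed

lemma GM: assumes A: "A \<in> Ob" and X: "X \<in> Ob"
  shows "Gs A X \<cdot> (M A \<otimes> I (TO X)) = M (A \<odot> TO X) \<cdot> (T (Gs A X) \<cdot> Gs (TO A) X)"
proof -
  have hm: "(I (TO A) \<otimes> M X) \<cdot> (T2 A (TO X) \<cdot> M (A \<odot> TO X)) =
     (M A \<otimes> I (TO X)) \<cdot> (I (TO (TO A)) \<otimes> M X) \<cdot> T2 (TO A) (TO X) \<cdot> T (I (TO A) \<otimes> M X) \<cdot> T (T2 A (TO X))"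
    using A X HM by (simp add: T_cmp)
  have th: "T (I (TO A) \<otimes> M X) \<cdot> (T (T2 A (TO X)) \<cdot> T (Gs A X)) = I (TO (TO A \<odot> TO X))"
  proof -
    have "T (I (TO A) \<otimes> M X) \<cdot> (T (T2 A (TO X)) \<cdot> T (Gs A X)) = T ((I (TO A) \<otimes> M X) \<cdot> (T2 A (TO X) \<cdot> Gs A X))"
      using A X by (simp add: T_cmp)
    then show ?thesis using A X by (simp add: HGn)
  qed
  have "M (A \<odot> TO X) \<cdot> (T (Gs A X) \<cdot> Gs (TO A) X) = Gs A X \<cdot> (I (TO A) \<otimes> M X) \<cdot> T2 A (TO X) \<cdot> M (A \<odot> TO X) \<cdot> T (Gs A X) \<cdot> Gs (TO A) X"
    using A X by (simp add: cont2[OF GH])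
  also have "\<dots> = Gs A X \<cdot> (M A \<otimes> I (TO X)) \<cdot> (I (TO (TO A)) \<otimes> M X) \<cdot> T2 (TO A) (TO X) \<cdot> T (I (TO A) \<otimes> M X) \<cdot> T (T2 A (TO X)) \<cdot> T (Gs A X) \<cdot> Gs (TO A) X"
    using A X by (simp add: cont2[OF hm])
  also have "\<dots> = Gs A X \<cdot> (M A \<otimes> I (TO X)) \<cdot> (I (TO (TO A)) \<otimes> M X) \<cdot> T2 (TO A) (TO X) \<cdot> Gs (TO A) X"
    using A X by (simp add: cont2[OF th])
  also have "\<dots> = Gs A X \<cdot> (M A \<otimes> I (TO X))"
    using A X by (simp add: HGc)
  finally show ?thesis ..
qed


lemma B1: assumes X: "X \<in> Ob" and Y: "Y \<in> Ob"
  shows "s X Y \<cdot> M (IH (TO X) Y) =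
    hm (I X) (M Y) \<cdot> (s X (TO Y) \<cdot> (T (s (TO X) Y) \<cdot> T (T (hm (M X) (I Y)))))"
proof -
  let ?a = "hm (M X) (I Y)" and ?P = "IH (TO X) Y" and ?P' = "IH (TO X) (TO Y)"
  let ?R = "s (TO X) Y \<cdot> T ?a"
  have R: "?R \<in> Ar" "Dm ?R = TO ?P" "Cd ?R = ?P'" using X Y by simp_all
  have kR: "T (s (TO X) Y) \<cdot> T (T ?a) = T ?R" using X Y by (simp add: T_cmp)
  have l1: "(I (TO ?P) \<otimes> E X) \<cdot> (M ?P \<otimes> I X) = M ?P \<otimes> E X"
    using X Y xI[of "M ?P" "E X"] by simp
  have L: "ev X (TO Y) \<cdot> ((s X Y \<cdot> M ?P) \<otimes> I X) = T (ev (TO X) Y) \<cdot> Gs ?P X \<cdot> (M ?P \<otimes> E X)"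
  proof -
    have "ev X (TO Y) \<cdot> ((s X Y \<cdot> M ?P) \<otimes> I X) = sg X Y \<cdot> (M ?P \<otimes> I X)"
      using X Y by (simp add: sg_cmp)
    also have "\<dots> = T (ev (TO X) Y) \<cdot> Gs ?P X \<cdot> (I (TO ?P) \<otimes> E X) \<cdot> (M ?P \<otimes> I X)"
      using X Y SF[OF X Y] by simp
    also have "\<dots> = T (ev (TO X) Y) \<cdot> Gs ?P X \<cdot> (M ?P \<otimes> E X)"
      using X Y by (simp add: l1)
    finally show ?thesis .
  qed
  have e1: "(I (TO ?P') \<otimes> E X) \<cdot> (T ?R \<otimes> I X) = (T ?R \<otimes> I (TO X)) \<cdot> (I (TO (TO ?P)) \<otimes> E X)"
  proof -
    have "(I (TO ?P') \<otimes> E X) \<cdot> (T ?R \<otimes> I X) = T ?R \<otimes> E X" using R X xI[of "T ?R" "E X"] by simp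
    moreover have "(T ?R \<otimes> I (TO X)) \<cdot> (I (TO (TO ?P)) \<otimes> E X) = T ?R \<otimes> E X" using R X Ix[of "T ?R" "E X"] by simp
    ultimately show ?thesis by simp
  qed
  have gn: "Gs ?P' X \<cdot> (T ?R \<otimes> I (TO X)) = T (?R \<otimes> I (TO X)) \<cdot> Gs (TO ?P) X"
    using GN[of ?R X] R X by simp
  have ev2: "T (ev (TO X) (TO Y)) \<cdot> T (?R \<otimes> I (TO X)) = T (T (ev (TO X) Y)) \<cdot> T (Gs ?P X)"
  proof -
    have "ev (TO X) (TO Y) \<cdot> (?R \<otimes> I (TO X)) = sg (TO X) Y \<cdot> (T ?a \<otimes> I (TO X))"
      using X Y by (simp add: sg_cmp)
    also have "\<dots> = T (ev (TO X) Y) \<cdot> Gs ?P X" using KG[OF X Y] .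
    finally have "ev (TO X) (TO Y) \<cdot> (?R \<otimes> I (TO X)) = T (ev (TO X) Y) \<cdot> Gs ?P X" .
    then have "T (ev (TO X) (TO Y) \<cdot> (?R \<otimes> I (TO X))) = T (T (ev (TO X) Y) \<cdot> Gs ?P X)" by simp
    then show ?thesis using R X Y by (simp add: T_cmp)
  qed
  have mn: "M Y \<cdot> T (T (ev (TO X) Y)) = T (ev (TO X) Y) \<cdot> M (?P \<odot> TO X)"
    using X Y M_nat[of "ev (TO X) Y"] by simp
  have gm: "M (?P \<odot> TO X) \<cdot> (T (Gs ?P X) \<cdot> Gs (TO ?P) X) = Gs ?P X \<cdot> (M ?P \<otimes> I (TO X))"
    using GM[of ?P X] X Y by simp
  have l2: "(M ?P \<otimes> I (TO X)) \<cdot> (I (TO (TO ?P)) \<otimes> E X) = M ?P \<otimes> E X"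
    using X Y Ix[of "M ?P" "E X"] by simp
  have "ev X (TO Y) \<cdot> ((hm (I X) (M Y) \<cdot> (s X (TO Y) \<cdot> (T (s (TO X) Y) \<cdot> T (T ?a)))) \<otimes> I X)
     = M Y \<cdot> ev X (TO (TO Y)) \<cdot> ((s X (TO Y) \<cdot> T ?R) \<otimes> I X)"
    using X Y by (simp add: mate_hm kR)
  also have "\<dots> = M Y \<cdot> sg X (TO Y) \<cdot> (T ?R \<otimes> I X)"
    using X Y R by (simp add: sg_cmp)
  also have "\<dots> = M Y \<cdot> T (ev (TO X) (TO Y)) \<cdot> Gs ?P' X \<cdot> (I (TO ?P') \<otimes> E X) \<cdot> (T ?R \<otimes> I X)"
    using X Y SF[of X "TO Y"] by simp
  also have "\<dots> = M Y \<cdot> T (ev (TO X) (TO Y)) \<cdot> Gs ?P' X \<cdot> (T ?R \<otimes> I (TO X)) \<cdot> (I (TO (TO ?P)) \<otimes> E X)"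
    using X Y R by (simp add: e1)
  also have "\<dots> = M Y \<cdot> T (ev (TO X) (TO Y)) \<cdot> T (?R \<otimes> I (TO X)) \<cdot> Gs (TO ?P) X \<cdot> (I (TO (TO ?P)) \<otimes> E X)"
    using X Y R by (simp add: cont[OF gn])
  also have "\<dots> = M Y \<cdot> T (T (ev (TO X) Y)) \<cdot> T (Gs ?P X) \<cdot> Gs (TO ?P) X \<cdot> (I (TO (TO ?P)) \<otimes> E X)"
    using X Y R by (simp add: cont[OF ev2])
  also have "\<dots> = T (ev (TO X) Y) \<cdot> M (?P \<odot> TO X) \<cdot> T (Gs ?P X) \<cdot> Gs (TO ?P) X \<cdot> (I (TO (TO ?P)) \<otimes> E X)"
    using X Y by (simp add: cont[OF mn])
  also have "\<dots> = T (ev (TO X) Y) \<cdot> Gs ?P X \<cdot> (M ?P \<otimes> I (TO X)) \<cdot> (I (TO (TO ?P)) \<otimes> E X)"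
    using X Y by (simp add: cont2[OF gm])
  also have "\<dots> = T (ev (TO X) Y) \<cdot> Gs ?P X \<cdot> (M ?P \<otimes> E X)"
    using X Y by (simp add: l2)
  finally have fin: "ev X (TO Y) \<cdot> ((s X Y \<cdot> M ?P) \<otimes> I X) =
     ev X (TO Y) \<cdot> ((hm (I X) (M Y) \<cdot> (s X (TO Y) \<cdot> (T (s (TO X) Y) \<cdot> T (T ?a)))) \<otimes> I X)"
    using L by simp
  show ?thesis by (rule mate_unique[OF _ _ _ _ _ _ _ fin]) (use X Y in simp_all)
qed


abbreviation cur where "cur X Y Z \<equiv> curry_iso C L X Y Z"

lemma cur_prop: assumes X: "X \<in> Ob" and Y: "Y \<in> Ob" and Z: "Z \<in> Ob"
  shows "cur X Y Z \<in> Ar \<and> Dm (cur X Y Z) = IH (X \<odot> Y) Z \<and> Cd (cur X Y Z) = IH X (IH Y Z) \<and>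
    ev Y Z \<cdot> ((ev X (IH Y Z) \<cdot> (cur X Y Z \<otimes> I X)) \<otimes> I Y) = ev (X \<odot> Y) Z"
proof -
  define k where "k = (THE k. k \<in> hom C (IH (X \<odot> Y) Z \<odot> X) (IH Y Z) \<and> ev Y Z \<cdot> (k \<otimes> I Y) = ev (X \<odot> Y) Z)"
  have ex: "\<exists>!k. (k \<in> Ar \<and> Dm k = IH (X \<odot> Y) Z \<odot> X \<and> Cd k = IH Y Z) \<and> ev Y Z \<cdot> (k \<otimes> I Y) = ev (X \<odot> Y) Z"
    by (rule lc_ex1) (use X Y Z in simp_all)
  have kp: "(k \<in> Ar \<and> Dm k = IH (X \<odot> Y) Z \<odot> X \<and> Cd k = IH Y Z) \<and> ev Y Z \<cdot> (k \<otimes> I Y) = ev (X \<odot> Y) Z"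
    unfolding k_def hom_def mem_Collect_eq by (rule theI'[OF ex])
  have ex2: "\<exists>!h. (h \<in> Ar \<and> Dm h = IH (X \<odot> Y) Z \<and> Cd h = IH X (IH Y Z)) \<and> ev X (IH Y Z) \<cdot> (h \<otimes> I X) = k"
    by (rule lc_ex1) (use X Y Z kp in simp_all)
  have "cur X Y Z = (THE h. (h \<in> Ar \<and> Dm h = IH (X \<odot> Y) Z \<and> Cd h = IH X (IH Y Z)) \<and> ev X (IH Y Z) \<cdot> (h \<otimes> I X) = k)"
    unfolding curry_iso_def Let_def k_def hom_def mem_Collect_eq by simp
  then have "(cur X Y Z \<in> Ar \<and> Dm (cur X Y Z) = IH (X \<odot> Y) Z \<and> Cd (cur X Y Z) = IH X (IH Y Z)) \<and> ev X (IH Y Z) \<cdot> (cur X Y Z \<otimes> I X) = k"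
    using theI'[OF ex2] by simp
  then show ?thesis using kp by simp
qed

lemma cur_arr[simp]: "X \<in> Ob \<Longrightarrow> Y \<in> Ob \<Longrightarrow> Z \<in> Ob \<Longrightarrow> cur X Y Z \<in> Ar"
  and cur_dm[simp]: "X \<in> Ob \<Longrightarrow> Y \<in> Ob \<Longrightarrow> Z \<in> Ob \<Longrightarrow> Dm (cur X Y Z) = IH (X \<odot> Y) Z"
  and cur_cd[simp]: "X \<in> Ob \<Longrightarrow> Y \<in> Ob \<Longrightarrow> Z \<in> Ob \<Longrightarrow> Cd (cur X Y Z) = IH X (IH Y Z)"
  and cur_ev: "X \<in> Ob \<Longrightarrow> Y \<in> Ob \<Longrightarrow> Z \<in> Ob \<Longrightarrow> ev Y Z \<cdot> ((ev X (IH Y Z) \<cdot> (cur X Y Z \<otimes> I X)) \<otimes> I Y) = ev (X \<odot> Y) Z"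
  using cur_prop by blast+

lemma cur_mate: assumes X: "X \<in> Ob" and Y: "Y \<in> Ob" and Z: "Z \<in> Ob" and g: "g \<in> Ar" "Cd g = IH (X \<odot> Y) Z"
  shows "ev Y Z \<cdot> ((ev X (IH Y Z) \<cdot> ((cur X Y Z \<cdot> g) \<otimes> I X)) \<otimes> I Y) = ev (X \<odot> Y) Z \<cdot> (g \<otimes> I (X \<odot> Y))"
proof -
  let ?k = "ev X (IH Y Z) \<cdot> (cur X Y Z \<otimes> I X)"
  have 1: "ev X (IH Y Z) \<cdot> ((cur X Y Z \<cdot> g) \<otimes> I X) = ?k \<cdot> (g \<otimes> I X)"
    using X Y Z g by (simp add: mate_cmp)
  have 2: "(?k \<cdot> (g \<otimes> I X)) \<otimes> I Y = (?k \<otimes> I Y) \<cdot> (g \<otimes> I (X \<odot> Y))"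
  proof -
    have "(?k \<cdot> (g \<otimes> I X)) \<otimes> I Y = (?k \<otimes> I Y) \<cdot> ((g \<otimes> I X) \<otimes> I Y)"
      using X Y Z g It[of Y "g \<otimes> I X" ?k] by simp
    then show ?thesis using X Y Z g by simp
  qed
  have 3: "ev Y Z \<cdot> (?k \<otimes> I Y) = ev (X \<odot> Y) Z" using cur_ev X Y Z by blast
  show ?thesis unfolding 1 2 using X Y Z g by (simp add: cont[OF 3])
qed

lemma dmate_inj: assumes X: "X \<in> Ob" and Y: "Y \<in> Ob" and V: "V \<in> Ob" and g: "g \<in> Ar" "g' \<in> Ar" "Dm g = Dm g'"
  "Cd g = IH X (IH Y V)" "Cd g' = IH X (IH Y V)"
  and e: "ev Y V \<cdot> ((ev X (IH Y V) \<cdot> (g \<otimes> I X)) \<otimes> I Y) = ev Y V \<cdot> ((ev X (IH Y V) \<cdot> (g' \<otimes> I X)) \<otimes> I Y)"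
  shows "g = g'"
proof -
  have e2: "ev X (IH Y V) \<cdot> (g \<otimes> I X) = ev X (IH Y V) \<cdot> (g' \<otimes> I X)"
    by (rule mate_unique[OF Y V _ _ _ _ _ e]) (use X Y V g in simp_all)
  show ?thesis by (rule mate_unique[OF X _ _ _ _ _ _ e2]) (use X Y V g in simp_all)
qed


lemma HT: assumes A: "A \<in> Ob" and X: "X \<in> Ob" and Y: "Y \<in> Ob"
  shows "(I (TO A) \<otimes> (M X \<otimes> I (TO Y))) \<cdot> (T2 A (TO X) \<otimes> I (TO Y)) \<cdot> (I (TO (A \<odot> TO X)) \<otimes> M Y) \<cdot>
          T2 (A \<odot> TO X) (TO Y) \<cdot> T (I A \<otimes> T2 X Y) =
         (I (TO A) \<otimes> T2 X Y) \<cdot> (I (TO A) \<otimes> M (X \<odot> Y)) \<cdot> T2 A (TO (X \<odot> Y))"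
proof -
  have s1: "(T2 A (TO X) \<otimes> I (TO Y)) \<cdot> (I (TO (A \<odot> TO X)) \<otimes> M Y) =
     (I (TO A \<odot> TO (TO X)) \<otimes> M Y) \<cdot> (T2 A (TO X) \<otimes> I (TO (TO Y)))"
  proof -
    have "(T2 A (TO X) \<otimes> I (TO Y)) \<cdot> (I (TO (A \<odot> TO X)) \<otimes> M Y) = T2 A (TO X) \<otimes> M Y"
      using A X Y Ix[of "T2 A (TO X)" "M Y"] by simp
    moreover have "(I (TO A \<odot> TO (TO X)) \<otimes> M Y) \<cdot> (T2 A (TO X) \<otimes> I (TO (TO Y))) = T2 A (TO X) \<otimes> M Y"
      using A X Y xI[of "T2 A (TO X)" "M Y"] by simp
    ultimately show ?thesis by simp
  qed
  have s2: "(T2 A (TO X) \<otimes> I (TO (TO Y))) \<cdot> T2 (A \<odot> TO X) (TO Y) = (I (TO A) \<otimes> T2 (TO X) (TO Y)) \<cdot> T2 A (TO X \<odot> TO Y)"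
    using A X Y T2_coassoc[of A "TO X" "TO Y"] by simp
  have s3: "T2 A (TO X \<odot> TO Y) \<cdot> T (I A \<otimes> T2 X Y) = (I (TO A) \<otimes> T (T2 X Y)) \<cdot> T2 A (TO (X \<odot> Y))"
    using A X Y T2_nat[of "I A" "T2 X Y"] by simp
  have s4: "(I (TO A) \<otimes> (M X \<otimes> I (TO Y))) \<cdot> (I (TO A \<odot> TO (TO X)) \<otimes> M Y) = I (TO A) \<otimes> (M X \<otimes> M Y)"
  proof -
    have i: "I (TO A \<odot> TO (TO X)) \<otimes> M Y = I (TO A) \<otimes> (I (TO (TO X)) \<otimes> M Y)"
    proof -
      have i1: "I (TO A) \<otimes> I (TO (TO X)) = I (TO A \<odot> TO (TO X))" using A X by simp
      have i2: "(I (TO A) \<otimes> I (TO (TO X))) \<otimes> M Y = I (TO A) \<otimes> (I (TO (TO X)) \<otimes> M Y)"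
        by (rule tar_assoc) (use A X Y in simp_all)
      show ?thesis using i2 unfolding i1 .
    qed
    have j: "(M X \<otimes> I (TO Y)) \<cdot> (I (TO (TO X)) \<otimes> M Y) = M X \<otimes> M Y"
      using A X Y Ix[of "M X" "M Y"] by simp
    show ?thesis unfolding i using A X Y by (simp add: tI j)
  qed
  have s5: "(I (TO A) \<otimes> (M X \<otimes> M Y)) \<cdot> (I (TO A) \<otimes> T2 (TO X) (TO Y)) \<cdot> (I (TO A) \<otimes> T (T2 X Y)) =
     (I (TO A) \<otimes> T2 X Y) \<cdot> (I (TO A) \<otimes> M (X \<odot> Y))"
  proof -
    have "(I (TO A) \<otimes> (M X \<otimes> M Y)) \<cdot> (I (TO A) \<otimes> T2 (TO X) (TO Y)) \<cdot> (I (TO A) \<otimes> T (T2 X Y)) =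
       I (TO A) \<otimes> ((M X \<otimes> M Y) \<cdot> T2 (TO X) (TO Y) \<cdot> T (T2 X Y))"
      using A X Y by (simp add: tI cont[OF tI])
    also have "\<dots> = I (TO A) \<otimes> (T2 X Y \<cdot> M (X \<odot> Y))" using A X Y by (simp add: M_comon)
    also have "\<dots> = (I (TO A) \<otimes> T2 X Y) \<cdot> (I (TO A) \<otimes> M (X \<odot> Y))" using A X Y by (simp add: tI)
    finally show ?thesis .
  qed
  show ?thesis using A X Y
    by (simp add: cont[OF s1] cont[OF s2] s3 cont[OF s4] cont2[OF s5])
qed


lemma GT: assumes Q: "Q \<in> Ob" and X: "X \<in> Ob" and Y: "Y \<in> Ob"
  shows "T (I Q \<otimes> T2 X Y) \<cdot> (Gs Q (X \<odot> Y) \<cdot> (I (TO Q) \<otimes> E (X \<odot> Y))) =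
         Gs (Q \<odot> TO X) Y \<cdot> ((Gs Q X \<otimes> I (TO Y)) \<cdot> (I (TO Q) \<otimes> (E X \<otimes> E Y)))"
proof -
  have gh2: "(Gs Q X \<otimes> I (TO Y)) \<cdot> ((I (TO Q) \<otimes> (M X \<otimes> I (TO Y))) \<cdot> (T2 Q (TO X) \<otimes> I (TO Y))) = I (TO (Q \<odot> TO X) \<odot> TO Y)"
  proof -
    have a: "(I (TO Q) \<otimes> M X) \<otimes> I (TO Y) = I (TO Q) \<otimes> (M X \<otimes> I (TO Y))"
      by (rule tar_assoc) (use Q X Y in simp_all)
    have b: "((I (TO Q) \<otimes> M X) \<otimes> I (TO Y)) \<cdot> (T2 Q (TO X) \<otimes> I (TO Y)) = ((I (TO Q) \<otimes> M X) \<cdot> T2 Q (TO X)) \<otimes> I (TO Y)"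
      by (rule It) (use Q X Y in simp_all)
    have c: "(Gs Q X \<otimes> I (TO Y)) \<cdot> (((I (TO Q) \<otimes> M X) \<cdot> T2 Q (TO X)) \<otimes> I (TO Y)) = (Gs Q X \<cdot> ((I (TO Q) \<otimes> M X) \<cdot> T2 Q (TO X))) \<otimes> I (TO Y)"
      by (rule It) (use Q X Y in simp_all)
    have "(Gs Q X \<otimes> I (TO Y)) \<cdot> ((I (TO Q) \<otimes> (M X \<otimes> I (TO Y))) \<cdot> (T2 Q (TO X) \<otimes> I (TO Y))) =
       (Gs Q X \<cdot> ((I (TO Q) \<otimes> M X) \<cdot> T2 Q (TO X))) \<otimes> I (TO Y)"
      unfolding a[symmetric] b c ..
    also have "\<dots> = I (TO (Q \<odot> TO X) \<odot> TO Y)" using Q X Y by (simp add: GH)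
    finally show ?thesis .
  qed
  have ht: "(I (TO Q) \<otimes> (M X \<otimes> I (TO Y))) \<cdot> ((T2 Q (TO X) \<otimes> I (TO Y)) \<cdot> ((I (TO (Q \<odot> TO X)) \<otimes> M Y) \<cdot>
          (T2 (Q \<odot> TO X) (TO Y) \<cdot> (T (I Q \<otimes> T2 X Y) \<cdot> r)))) =
         (I (TO Q) \<otimes> T2 X Y) \<cdot> ((I (TO Q) \<otimes> M (X \<odot> Y)) \<cdot> (T2 Q (TO (X \<odot> Y)) \<cdot> r))"
    if r: "r \<in> Ar" "Cd r = TO (Q \<odot> TO (X \<odot> Y))" for r
  proof -
    have "((I (TO Q) \<otimes> (M X \<otimes> I (TO Y))) \<cdot> (T2 Q (TO X) \<otimes> I (TO Y)) \<cdot> (I (TO (Q \<odot> TO X)) \<otimes> M Y) \<cdot>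
          T2 (Q \<odot> TO X) (TO Y) \<cdot> T (I Q \<otimes> T2 X Y)) \<cdot> r =
         ((I (TO Q) \<otimes> T2 X Y) \<cdot> (I (TO Q) \<otimes> M (X \<odot> Y)) \<cdot> T2 Q (TO (X \<odot> Y))) \<cdot> r"
      by (simp only: HT[OF Q X Y])
    then show ?thesis using Q X Y r by simp
  qed
  have ec: "(I (TO Q) \<otimes> T2 X Y) \<cdot> (I (TO Q) \<otimes> E (X \<odot> Y)) = I (TO Q) \<otimes> (E X \<otimes> E Y)"
    using Q X Y by (simp add: tI E_comon)
  have "T (I Q \<otimes> T2 X Y) \<cdot> (Gs Q (X \<odot> Y) \<cdot> (I (TO Q) \<otimes> E (X \<odot> Y))) =
     Gs (Q \<odot> TO X) Y \<cdot> (Gs Q X \<otimes> I (TO Y)) \<cdot> (I (TO Q) \<otimes> (M X \<otimes> I (TO Y))) \<cdot> (T2 Q (TO X) \<otimes> I (TO Y)) \<cdot>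
       (I (TO (Q \<odot> TO X)) \<otimes> M Y) \<cdot> T2 (Q \<odot> TO X) (TO Y) \<cdot> T (I Q \<otimes> T2 X Y) \<cdot> Gs Q (X \<odot> Y) \<cdot> (I (TO Q) \<otimes> E (X \<odot> Y))"
    using Q X Y by (simp add: cont2[OF gh2] cont2[OF GH])
  also have "\<dots> = Gs (Q \<odot> TO X) Y \<cdot> (Gs Q X \<otimes> I (TO Y)) \<cdot> (I (TO Q) \<otimes> T2 X Y) \<cdot> (I (TO Q) \<otimes> M (X \<odot> Y)) \<cdot>
       T2 Q (TO (X \<odot> Y)) \<cdot> Gs Q (X \<odot> Y) \<cdot> (I (TO Q) \<otimes> E (X \<odot> Y))"
    using Q X Y by (simp add: ht)
  also have "\<dots> = Gs (Q \<odot> TO X) Y \<cdot> ((Gs Q X \<otimes> I (TO Y)) \<cdot> (I (TO Q) \<otimes> (E X \<otimes> E Y)))"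
    using Q X Y by (simp add: HGc ec)
  finally show ?thesis .
qed


lemma B3: assumes X: "X \<in> Ob" and Y: "Y \<in> Ob" and Z: "Z \<in> Ob"
  shows "cur X Y (TO Z) \<cdot> (s (X \<odot> Y) Z \<cdot> T (hm (T2 X Y) (I Z))) =
    hm (I X) (s Y Z) \<cdot> (s X (IH (TO Y) Z) \<cdot> T (cur (TO X) (TO Y) Z))"
proof -
  let ?Q = "IH (TO X \<odot> TO Y) Z" and ?Q' = "IH (TO Y) Z" and ?Pq = "IH (TO X) (IH (TO Y) Z)"
  let ?P0 = "IH (TO (X \<odot> Y)) Z" and ?h = "hm (T2 X Y) (I Z)" and ?c = "cur (TO X) (TO Y) Z"
  let ?kk = "ev (TO X) ?Q' \<cdot> (?c \<otimes> I (TO X))"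
  let ?XY = "X \<odot> Y"
  have XY: "?XY \<in> Ob" using X Y by simp
  have h: "?h \<in> Ar" "Dm ?h = ?Q" "Cd ?h = ?P0" using X Y Z by simp_all
  have kk: "?kk \<in> Ar" "Dm ?kk = ?Q \<odot> TO X" "Cd ?kk = ?Q'" using X Y Z by simp_all
  have e1: "(I (TO ?P0) \<otimes> E ?XY) \<cdot> (T ?h \<otimes> I ?XY) = (T ?h \<otimes> I (TO ?XY)) \<cdot> (I (TO ?Q) \<otimes> E ?XY)"
  proof -
    have "(I (TO ?P0) \<otimes> E ?XY) \<cdot> (T ?h \<otimes> I ?XY) = T ?h \<otimes> E ?XY" using XY h xI[of "T ?h" "E ?XY"] by simp
    moreover have "(T ?h \<otimes> I (TO ?XY)) \<cdot> (I (TO ?Q) \<otimes> E ?XY) = T ?h \<otimes> E ?XY" using XY h Ix[of "T ?h" "E ?XY"] by simp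
    ultimately show ?thesis by simp
  qed
  have gn1: "Gs ?P0 ?XY \<cdot> (T ?h \<otimes> I (TO ?XY)) = T (?h \<otimes> I (TO ?XY)) \<cdot> Gs ?Q ?XY"
    using GN[of ?h ?XY] h XY by simp
  have ev1: "T (ev (TO ?XY) Z) \<cdot> T (?h \<otimes> I (TO ?XY)) = T (ev (TO X \<odot> TO Y) Z) \<cdot> T (I ?Q \<otimes> T2 X Y)"
  proof -
    have "ev (TO ?XY) Z \<cdot> (?h \<otimes> I (TO ?XY)) = ev (TO X \<odot> TO Y) Z \<cdot> (I ?Q \<otimes> T2 X Y)"
      using X Y Z by (simp add: hm_ev')
    then show ?thesis using X Y Z by (simp add: T_cmp[symmetric])
  qed
  have LHS: "ev Y (TO Z) \<cdot> ((ev X (IH Y (TO Z)) \<cdot> ((cur X Y (TO Z) \<cdot> (s ?XY Z \<cdot> T ?h)) \<otimes> I X)) \<otimes> I Y) =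
     T (ev (TO X \<odot> TO Y) Z) \<cdot> Gs (?Q \<odot> TO X) Y \<cdot> (Gs ?Q X \<otimes> I (TO Y)) \<cdot> (I (TO ?Q) \<otimes> (E X \<otimes> E Y))"
  proof -
    have "ev Y (TO Z) \<cdot> ((ev X (IH Y (TO Z)) \<cdot> ((cur X Y (TO Z) \<cdot> (s ?XY Z \<cdot> T ?h)) \<otimes> I X)) \<otimes> I Y) =
       ev ?XY (TO Z) \<cdot> ((s ?XY Z \<cdot> T ?h) \<otimes> I ?XY)"
      using X Y Z h by (simp add: cur_mate)
    also have "\<dots> = sg ?XY Z \<cdot> (T ?h \<otimes> I ?XY)"
      using X Y Z h by (simp add: sg_cmp)
    also have "\<dots> = T (ev (TO ?XY) Z) \<cdot> Gs ?P0 ?XY \<cdot> (I (TO ?P0) \<otimes> E ?XY) \<cdot> (T ?h \<otimes> I ?XY)"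
      using X Y Z SF[OF XY Z] by simp
    also have "\<dots> = T (ev (TO ?XY) Z) \<cdot> Gs ?P0 ?XY \<cdot> (T ?h \<otimes> I (TO ?XY)) \<cdot> (I (TO ?Q) \<otimes> E ?XY)"
      using X Y Z h by (simp add: e1)
    also have "\<dots> = T (ev (TO ?XY) Z) \<cdot> T (?h \<otimes> I (TO ?XY)) \<cdot> Gs ?Q ?XY \<cdot> (I (TO ?Q) \<otimes> E ?XY)"
      using X Y Z h by (simp add: cont[OF gn1])
    also have "\<dots> = T (ev (TO X \<odot> TO Y) Z) \<cdot> T (I ?Q \<otimes> T2 X Y) \<cdot> Gs ?Q ?XY \<cdot> (I (TO ?Q) \<otimes> E ?XY)"
      using X Y Z h by (simp add: cont[OF ev1])
    also have "\<dots> = T (ev (TO X \<odot> TO Y) Z) \<cdot> Gs (?Q \<odot> TO X) Y \<cdot> (Gs ?Q X \<otimes> I (TO Y)) \<cdot> (I (TO ?Q) \<otimes> (E X \<otimes> E Y))"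
      using X Y Z GT[of ?Q X Y] by simp
    finally show ?thesis .
  qed
  have e2: "(I (TO ?Pq) \<otimes> E X) \<cdot> (T ?c \<otimes> I X) = (T ?c \<otimes> I (TO X)) \<cdot> (I (TO ?Q) \<otimes> E X)"
  proof -
    have "(I (TO ?Pq) \<otimes> E X) \<cdot> (T ?c \<otimes> I X) = T ?c \<otimes> E X" using X Y Z xI[of "T ?c" "E X"] by simp
    moreover have "(T ?c \<otimes> I (TO X)) \<cdot> (I (TO ?Q) \<otimes> E X) = T ?c \<otimes> E X" using X Y Z Ix[of "T ?c" "E X"] by simp
    ultimately show ?thesis by simp
  qed
  have gn2: "Gs ?Pq X \<cdot> (T ?c \<otimes> I (TO X)) = T (?c \<otimes> I (TO X)) \<cdot> Gs ?Q X"
    using GN[of ?c X] X Y Z by simp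
  have w: "sg X ?Q' \<cdot> (T ?c \<otimes> I X) = T ?kk \<cdot> (Gs ?Q X \<cdot> (I (TO ?Q) \<otimes> E X))"
  proof -
    have "sg X ?Q' \<cdot> (T ?c \<otimes> I X) = T (ev (TO X) ?Q') \<cdot> Gs ?Pq X \<cdot> (I (TO ?Pq) \<otimes> E X) \<cdot> (T ?c \<otimes> I X)"
      using X Y Z SF[of X ?Q'] by simp
    also have "\<dots> = T (ev (TO X) ?Q') \<cdot> Gs ?Pq X \<cdot> (T ?c \<otimes> I (TO X)) \<cdot> (I (TO ?Q) \<otimes> E X)"
      using X Y Z by (simp add: e2)
    also have "\<dots> = T (ev (TO X) ?Q') \<cdot> T (?c \<otimes> I (TO X)) \<cdot> Gs ?Q X \<cdot> (I (TO ?Q) \<otimes> E X)"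
      using X Y Z by (simp add: cont[OF gn2])
    also have "\<dots> = T ?kk \<cdot> (Gs ?Q X \<cdot> (I (TO ?Q) \<otimes> E X))"
      using X Y Z by (simp add: T_cmp)
    finally show ?thesis .
  qed
  let ?w = "T ?kk \<cdot> (Gs ?Q X \<cdot> (I (TO ?Q) \<otimes> E X))"
  have e3: "(I (TO ?Q') \<otimes> E Y) \<cdot> (?w \<otimes> I Y) = (T ?kk \<otimes> I (TO Y)) \<cdot> ((Gs ?Q X \<otimes> I (TO Y)) \<cdot> (I (TO ?Q) \<otimes> (E X \<otimes> E Y)))"
  proof -
    have a: "(I (TO ?Q') \<otimes> E Y) \<cdot> (?w \<otimes> I Y) = ?w \<otimes> E Y" using X Y Z kk xI[of ?w "E Y"] by simp
    have b: "?w \<otimes> E Y = (T ?kk \<otimes> I (TO Y)) \<cdot> ((Gs ?Q X \<cdot> (I (TO ?Q) \<otimes> E X)) \<otimes> E Y)"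
      using X Y Z kk interchange[of "Gs ?Q X \<cdot> (I (TO ?Q) \<otimes> E X)" "T ?kk" "E Y" "I (TO Y)"] by simp
    have c: "(Gs ?Q X \<cdot> (I (TO ?Q) \<otimes> E X)) \<otimes> E Y = (Gs ?Q X \<otimes> I (TO Y)) \<cdot> ((I (TO ?Q) \<otimes> E X) \<otimes> E Y)"
      using X Y Z interchange[of "I (TO ?Q) \<otimes> E X" "Gs ?Q X" "E Y" "I (TO Y)"] by simp
    have d: "(I (TO ?Q) \<otimes> E X) \<otimes> E Y = I (TO ?Q) \<otimes> (E X \<otimes> E Y)"
      by (rule tar_assoc) (use X Y Z in simp_all)
    show ?thesis unfolding a b c d ..
  qed
  have gn3: "Gs ?Q' Y \<cdot> (T ?kk \<otimes> I (TO Y)) = T (?kk \<otimes> I (TO Y)) \<cdot> Gs (?Q \<odot> TO X) Y"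
    using GN[of ?kk Y] X Y Z kk by simp
  have ev3: "T (ev (TO Y) Z) \<cdot> T (?kk \<otimes> I (TO Y)) = T (ev (TO X \<odot> TO Y) Z)"
  proof -
    have "ev (TO Y) Z \<cdot> (?kk \<otimes> I (TO Y)) = ev (TO X \<odot> TO Y) Z" using cur_ev[of "TO X" "TO Y" Z] X Y Z by simp
    then show ?thesis using X Y Z kk by (simp add: T_cmp[symmetric])
  qed
  have RHS: "ev Y (TO Z) \<cdot> ((ev X (IH Y (TO Z)) \<cdot> ((hm (I X) (s Y Z) \<cdot> (s X ?Q' \<cdot> T ?c)) \<otimes> I X)) \<otimes> I Y) =
     T (ev (TO X \<odot> TO Y) Z) \<cdot> Gs (?Q \<odot> TO X) Y \<cdot> (Gs ?Q X \<otimes> I (TO Y)) \<cdot> (I (TO ?Q) \<otimes> (E X \<otimes> E Y))"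
  proof -
    have i: "ev X (IH Y (TO Z)) \<cdot> ((hm (I X) (s Y Z) \<cdot> (s X ?Q' \<cdot> T ?c)) \<otimes> I X) = s Y Z \<cdot> ?w"
    proof -
      have "ev X (IH Y (TO Z)) \<cdot> ((hm (I X) (s Y Z) \<cdot> (s X ?Q' \<cdot> T ?c)) \<otimes> I X) = s Y Z \<cdot> ev X (TO ?Q') \<cdot> ((s X ?Q' \<cdot> T ?c) \<otimes> I X)"
        using X Y Z by (simp add: mate_hm)
      also have "\<dots> = s Y Z \<cdot> sg X ?Q' \<cdot> (T ?c \<otimes> I X)"
        using X Y Z by (simp add: sg_cmp)
      finally show ?thesis using w by simp
    qed
    have "ev Y (TO Z) \<cdot> ((s Y Z \<cdot> ?w) \<otimes> I Y) = sg Y Z \<cdot> (?w \<otimes> I Y)"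
      using X Y Z kk by (simp add: sg_cmp)
    also have "\<dots> = T (ev (TO Y) Z) \<cdot> Gs ?Q' Y \<cdot> (I (TO ?Q') \<otimes> E Y) \<cdot> (?w \<otimes> I Y)"
      using X Y Z SF[OF Y Z] by simp
    also have "\<dots> = T (ev (TO Y) Z) \<cdot> Gs ?Q' Y \<cdot> (T ?kk \<otimes> I (TO Y)) \<cdot> (Gs ?Q X \<otimes> I (TO Y)) \<cdot> (I (TO ?Q) \<otimes> (E X \<otimes> E Y))"
      using X Y Z kk by (simp add: e3)
    also have "\<dots> = T (ev (TO Y) Z) \<cdot> T (?kk \<otimes> I (TO Y)) \<cdot> Gs (?Q \<odot> TO X) Y \<cdot> (Gs ?Q X \<otimes> I (TO Y)) \<cdot> (I (TO ?Q) \<otimes> (E X \<otimes> E Y))"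
      using X Y Z kk by (simp add: cont[OF gn3])
    also have "\<dots> = T (ev (TO X \<odot> TO Y) Z) \<cdot> Gs (?Q \<odot> TO X) Y \<cdot> (Gs ?Q X \<otimes> I (TO Y)) \<cdot> (I (TO ?Q) \<otimes> (E X \<otimes> E Y))"
      using X Y Z kk by (simp add: cont[OF ev3])
    finally show ?thesis unfolding i .
  qed
  have fin: "ev Y (TO Z) \<cdot> ((ev X (IH Y (TO Z)) \<cdot> ((cur X Y (TO Z) \<cdot> (s ?XY Z \<cdot> T ?h)) \<otimes> I X)) \<otimes> I Y) =
      ev Y (TO Z) \<cdot> ((ev X (IH Y (TO Z)) \<cdot> ((hm (I X) (s Y Z) \<cdot> (s X ?Q' \<cdot> T ?c)) \<otimes> I X)) \<otimes> I Y)"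
    unfolding LHS RHS ..
  show ?thesis by (rule dmate_inj[OF X Y _ _ _ _ _ _ fin]) (use X Y Z in simp_all)
qed

end

theorem mainTheorem7:
  fixes C :: "('o,'m) mcat" and L :: "('o,'m) lclosed" and B :: "('o,'m) bimon"
  assumes "strict_moncat C" and "left_closed C L" and "bimonad C B"
  shows
    "(\<forall>s s'. left_antipode C L B s \<and> left_antipode C L B s' \<longrightarrow>
        (\<forall>X\<in>ob C. \<forall>Y\<in>ob C. s X Y = s' X Y))
   \<and> (left_hopf C B \<longrightarrow>
       (\<forall>s. left_antipode C L B s \<longrightarrow>
         (\<forall>X\<in>ob C. \<forall>Y\<in>ob C. \<forall>Z\<in>ob C.
            cmp C (s X Y) (mu B (ihob L (Tob B X) Y)) =
              cmp C (ihmor C L (idm C X) (mu B Y))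
                (cmp C (s X (Tob B Y))
                  (cmp C (Tar B (s (Tob B X) Y))
                    (Tar B (Tar B (ihmor C L (mu B X) (idm C Y))))))
          \<and> cmp C (s X Y) (eta B (ihob L (Tob B X) Y)) = ihmor C L (eta B X) (eta B Y)
          \<and> cmp C (curry_iso C L X Y (Tob B Z))
              (cmp C (s (tob C X Y) Z) (Tar B (ihmor C L (Ttwo B X Y) (idm C Z)))) =
            cmp C (ihmor C L (idm C X) (s Y Z))
              (cmp C (s X (ihob L (Tob B Y) Z)) (Tar B (curry_iso C L (Tob B X) (Tob B Y) Z)))
          \<and> cmp C (evm L (one C) (Tob B X))
              (cmp C (s (one C) X) (Tar B (ihmor C L (Tzero B) (idm C X)))) =
            Tar B (evm L (one C) X))))"
proof -
  interpret ctx C L B using assms by unfold_locales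
  have p1: "\<forall>s s'. left_antipode C L B s \<and> left_antipode C L B s' \<longrightarrow>
        (\<forall>X\<in>ob C. \<forall>Y\<in>ob C. s X Y = s' X Y)"
  proof (intro allI impI ballI)
    fix s s' X Y
    assume h: "left_antipode C L B s \<and> left_antipode C L B s'" and X: "X \<in> ob C" and Y: "Y \<in> ob C"
    interpret a: anti C L B s using assms h by unfold_locales simp_all
    show "s X Y = s' X Y" using a.uniq[of s' X Y] h X Y by simp
  qed
  have p2: "left_hopf C B \<longrightarrow>
       (\<forall>s. left_antipode C L B s \<longrightarrow>
         (\<forall>X\<in>ob C. \<forall>Y\<in>ob C. \<forall>Z\<in>ob C.
            cmp C (s X Y) (mu B (ihob L (Tob B X) Y)) =
              cmp C (ihmor C L (idm C X) (mu B Y))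
                (cmp C (s X (Tob B Y))
                  (cmp C (Tar B (s (Tob B X) Y))
                    (Tar B (Tar B (ihmor C L (mu B X) (idm C Y))))))
          \<and> cmp C (s X Y) (eta B (ihob L (Tob B X) Y)) = ihmor C L (eta B X) (eta B Y)
          \<and> cmp C (curry_iso C L X Y (Tob B Z))
              (cmp C (s (tob C X Y) Z) (Tar B (ihmor C L (Ttwo B X Y) (idm C Z)))) =
            cmp C (ihmor C L (idm C X) (s Y Z))
              (cmp C (s X (ihob L (Tob B Y) Z)) (Tar B (curry_iso C L (Tob B X) (Tob B Y) Z)))
          \<and> cmp C (evm L (one C) (Tob B X))
              (cmp C (s (one C) X) (Tar B (ihmor C L (Tzero B) (idm C X)))) =
            Tar B (evm L (one C) X)))"
  proof (intro impI allI ballI)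
    fix s X Y Z
    assume hh: "left_hopf C B" and h: "left_antipode C L B s" and X: "X \<in> ob C" and Y: "Y \<in> ob C" and Z: "Z \<in> ob C"
    interpret hp: hopf C L B s using assms h hh by unfold_locales simp_all
    show "cmp C (s X Y) (mu B (ihob L (Tob B X) Y)) =
              cmp C (ihmor C L (idm C X) (mu B Y))
                (cmp C (s X (Tob B Y))
                  (cmp C (Tar B (s (Tob B X) Y))
                    (Tar B (Tar B (ihmor C L (mu B X) (idm C Y))))))
          \<and> cmp C (s X Y) (eta B (ihob L (Tob B X) Y)) = ihmor C L (eta B X) (eta B Y)
          \<and> cmp C (curry_iso C L X Y (Tob B Z))
              (cmp C (s (tob C X Y) Z) (Tar B (ihmor C L (Ttwo B X Y) (idm C Z)))) =
            cmp C (ihmor C L (idm C X) (s Y Z))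
              (cmp C (s X (ihob L (Tob B Y) Z)) (Tar B (curry_iso C L (Tob B X) (Tob B Y) Z)))
          \<and> cmp C (evm L (one C) (Tob B X))
              (cmp C (s (one C) X) (Tar B (ihmor C L (Tzero B) (idm C X)))) =
            Tar B (evm L (one C) X)"
      using hp.B1[OF X Y] hp.B2[OF X Y] hp.B3[OF X Y Z] hp.B4[OF X] by blast
  qed
  show ?thesis using p1 p2 by blast
qed

end
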